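(* Let $\beta>0$, $0\le\alpha\le\beta$, and let $M$ be the set of global maximizers on $[-1,1]^2$ of \[ \Gamma(x):=\tfrac12\Big(\tfrac14\beta x_1^2+\tfrac14\beta x_2^2+\tfrac12\alpha x_1x_2\Big)-\tfrac12 I(x_1)-\tfrac12 I(x_2). \] Then for every $\varepsilon>0$ there is $c>0$ such that $\mu_{N,\alpha,\beta,S}\big(m\notin B_\varepsilon(M)\big)\le e^{-cN}$ for all sufficiently large $N$, where $m=(m_1,m_2)$ and $B_\varepsilon(M)$ is the union of open Euclidean balls of radius $\varepsilon$ around the points of $M$. Moreover: (i) if $\alpha+\beta\le 2$, then $(0,0)$ is the unique solution in $(-1,1)^2$ of the critical point equations $\frac12\beta x_1+\frac12\alpha x_2=\operatorname{artanh}(x_1)$, $\frac12\beta x_2+\frac12\alpha x_1=\operatorname{artanh}(x_2)$ (for $\alpha>0$), and $M=\{(0,0)\}$; in particular the law of $m$ converges weakly to $\delta_{(0,0)}$; (ii) if $\alpha+\beta>2$ and $\alpha>0$, then $M=\{(m^*,m^* ),(-m^*,-m^* )\}$, where $m^*>0$ is the positive solution of $\tanh\big(\frac{\alpha+\beta}{2}z\big)=z$.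
   Context: Block spin Ising model: $N$ is even, $S\subset\{1,\dots,N\}$ with $|S|=N/2$. Write $i\sim j$ if $i,j$ both lie in $S$ or both in $S^c$, $i\not\sim j$ otherwise. Hamiltonian $H_{N,\alpha,\beta,S}(\sigma)=-\frac{\beta}{2N}\sum_{i\sim j}\sigma_i\sigma_j-\frac{\alpha}{2N}\sum_{i\not\sim j}\sigma_i\sigma_j$ on $\{-1,+1\}^N$, Gibbs measure $\mu_{N,\alpha,\beta,S}(\sigma)\propto e^{-H_{N,\alpha,\beta,S}(\sigma)}$. Block magnetizations $m_1=\frac2N\sum_{i\in S}\sigma_i$, $m_2=\frac2N\sum_{i\notin S}\sigma_i$. $I(z):=\frac12(1+z)\log(1+z)+\frac12(1-z)\log(1-z)$ for $|z|\le1$. *)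

theory Defs
  imports "HOL-Analysis.Analysis" "HOL-Library.FuncSet"
begin

definition same_block :: "nat set \<Rightarrow> nat \<Rightarrow> nat \<Rightarrow> bool" where
  "same_block S i j \<longleftrightarrow> (i \<in> S \<longleftrightarrow> j \<in> S)"

definition configs :: "nat \<Rightarrow> (nat \<Rightarrow> real) set" where
  "configs N = PiE {1..N} (\<lambda>_. {-1, 1})"

text \<open>Sums over all ordered pairs (i,j) of sites (diagonal included).\<close>
definition hamiltonian :: "nat \<Rightarrow> real \<Rightarrow> real \<Rightarrow> nat set \<Rightarrow> (nat \<Rightarrow> real) \<Rightarrow> real" where
  "hamiltonian N \<alpha> \<beta> S \<sigma> =
     - (\<beta> / (2 * real N)) * (\<Sum>i\<in>{1..N}. \<Sum>j\<in>{1..N}. if same_block S i j then \<sigma> i * \<sigma> j else 0)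
     - (\<alpha> / (2 * real N)) * (\<Sum>i\<in>{1..N}. \<Sum>j\<in>{1..N}. if same_block S i j then 0 else \<sigma> i * \<sigma> j)"

definition gibbs_weight :: "nat \<Rightarrow> real \<Rightarrow> real \<Rightarrow> nat set \<Rightarrow> (nat \<Rightarrow> real) \<Rightarrow> real" where
  "gibbs_weight N \<alpha> \<beta> S \<sigma> = exp (- hamiltonian N \<alpha> \<beta> S \<sigma>)"

definition partition_fn :: "nat \<Rightarrow> real \<Rightarrow> real \<Rightarrow> nat set \<Rightarrow> real" where
  "partition_fn N \<alpha> \<beta> S = (\<Sum>\<sigma>\<in>configs N. gibbs_weight N \<alpha> \<beta> S \<sigma>)"

definition gibbs_prob :: "nat \<Rightarrow> real \<Rightarrow> real \<Rightarrow> nat set \<Rightarrow> ((nat \<Rightarrow> real) \<Rightarrow> bool) \<Rightarrow> real" where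
  "gibbs_prob N \<alpha> \<beta> S P =
     (\<Sum>\<sigma>\<in>{\<sigma>\<in>configs N. P \<sigma>}. gibbs_weight N \<alpha> \<beta> S \<sigma>) / partition_fn N \<alpha> \<beta> S"

definition gibbs_expect :: "nat \<Rightarrow> real \<Rightarrow> real \<Rightarrow> nat set \<Rightarrow> ((nat \<Rightarrow> real) \<Rightarrow> real) \<Rightarrow> real" where
  "gibbs_expect N \<alpha> \<beta> S g =
     (\<Sum>\<sigma>\<in>configs N. gibbs_weight N \<alpha> \<beta> S \<sigma> * g \<sigma>) / partition_fn N \<alpha> \<beta> S"

definition magn :: "nat \<Rightarrow> nat set \<Rightarrow> (nat \<Rightarrow> real) \<Rightarrow> real \<times> real" where
  "magn N S \<sigma> = (2 / real N * (\<Sum>i\<in>S. \<sigma> i), 2 / real N * (\<Sum>i\<in>{1..N} - S. \<sigma> i))"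

definition Ient :: "real \<Rightarrow> real" where
  "Ient z = 1/2 * (1 + z) * ln (1 + z) + 1/2 * (1 - z) * ln (1 - z)"

definition Gamma_fn :: "real \<Rightarrow> real \<Rightarrow> real \<times> real \<Rightarrow> real" where
  "Gamma_fn \<alpha> \<beta> x = 1/2 * (1/4 * \<beta> * (fst x)^2 + 1/4 * \<beta> * (snd x)^2 + 1/2 * \<alpha> * fst x * snd x)
                      - 1/2 * Ient (fst x) - 1/2 * Ient (snd x)"

definition square :: "(real \<times> real) set" where
  "square = {-1..1} \<times> {-1..1}"

definition maximizers :: "real \<Rightarrow> real \<Rightarrow> (real \<times> real) set" where
  "maximizers \<alpha> \<beta> = {x \<in> square. \<forall>y\<in>square. Gamma_fn \<alpha> \<beta> y \<le> Gamma_fn \<alpha> \<beta> x}"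

definition admissible :: "nat \<Rightarrow> nat set \<Rightarrow> bool" where
  "admissible N S \<longleftrightarrow> even N \<and> S \<subseteq> {1..N} \<and> card S = N div 2"

definition law_m_weak_conv_dirac :: "real \<Rightarrow> real \<Rightarrow> (nat \<Rightarrow> nat set) \<Rightarrow> real \<times> real \<Rightarrow> bool" where
  "law_m_weak_conv_dirac \<alpha> \<beta> Sseq p \<longleftrightarrow>
     (\<forall>f :: real \<times> real \<Rightarrow> real. continuous_on UNIV f \<and> bounded (range f) \<longrightarrow>
        (\<lambda>k. gibbs_expect (2 * k) \<alpha> \<beta> (Sseq k) (\<lambda>\<sigma>. f (magn (2 * k) (Sseq k) \<sigma>))) \<longlonglongrightarrow> f p)"

end

theory Submission
  imports Defs "HOL-Real_Asymp.Real_Asymp"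
begin


definition Ef :: "real \<Rightarrow> real" where "Ef u = exp u + exp (- u)"

lemma Ef_pos: "Ef u > 0" unfolding Ef_def by (simp add: add_pos_pos)

lemma kl_term:
  fixes p a :: real assumes "p \<ge> 0" "a > 0"
  shows "p - a \<le> p * ln (p / a)" and "p * ln (p / a) \<le> p * (p - a) / a"
proof -
  have "p - a \<le> p * ln (p / a) \<and> p * ln (p / a) \<le> p * (p - a) / a"
  proof (cases "p = 0")
    case True then show ?thesis using assms by simp
  next
    case False
    then have pp: "p > 0" using assms by simp
    have l1: "ln (a / p) \<le> a / p - 1" using ln_le_minus_one[of "a/p"] pp assms by simp
    have l2: "ln (p / a) \<le> p / a - 1" using ln_le_minus_one[of "p/a"] pp assms by simp
    have e: "ln (p / a) = - ln (a / p)" using pp assms by (simp add: ln_div)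
    have "p * (1 - a / p) \<le> p * ln (p / a)" using l1 e pp by (intro mult_left_mono) auto
    moreover have "p * (1 - a / p) = p - a" using pp by (simp add: field_simps)
    moreover have "p * ln (p / a) \<le> p * (p / a - 1)" using l2 pp by (intro mult_left_mono) auto
    moreover have "p * (p / a - 1) = p * (p - a) / a" using assms by (simp add: field_simps)
    ultimately show ?thesis by simp
  qed
  then show "p - a \<le> p * ln (p / a)" and "p * ln (p / a) \<le> p * (p - a) / a" by auto
qed

lemma ln_split: "p \<ge> 0 \<Longrightarrow> a > 0 \<Longrightarrow> p * ln (p / a) = p * ln p - p * ln (a::real)"
proof (cases "p = 0")
  case False
  assume "p \<ge> 0" "a > 0"
  with False have "p > 0" by simp
  with \<open>a > 0\<close> have "ln (p / a) = ln p - ln a" by (simp add: ln_div)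
  then show ?thesis by (simp add: right_diff_distrib)
qed simp

lemma kl_identity:
  fixes v u :: real assumes "\<bar>v\<bar> \<le> 1"
  defines "p \<equiv> (1 + v) / 2" and "a \<equiv> exp u / Ef u"
  shows "Ient v + ln (Ef u / 2) - v * u = p * ln (p / a) + (1 - p) * ln ((1 - p) / (1 - a))"
proof -
  have E: "Ef u > 0" by (rule Ef_pos)
  have a0: "a > 0" unfolding a_def using E by simp
  have b: "1 - a = exp (-u) / Ef u" unfolding a_def using E by (simp add: Ef_def field_simps)
  have b0: "1 - a > 0" using b E by simp
  have la: "ln a = u - ln (Ef u)" unfolding a_def using E by (simp add: ln_div)
  have lb: "ln (1 - a) = - u - ln (Ef u)" unfolding b using E by (simp add: ln_div)
  have p0: "p \<ge> 0" "1 - p \<ge> 0" using assms unfolding p_def by auto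
  have I1: "1/2 * (1 + v) * ln (1 + v) = p * ln 2 + p * ln p"
  proof (cases "p = 0")
    case True then show ?thesis unfolding p_def by simp
  next
    case False then have "p > 0" using p0 by simp
    then have "ln (1 + v) = ln 2 + ln p" unfolding p_def by (simp add: ln_div)
    then show ?thesis unfolding p_def by (simp add: algebra_simps)
  qed
  have I2: "1/2 * (1 - v) * ln (1 - v) = (1 - p) * ln 2 + (1 - p) * ln (1 - p)"
  proof (cases "1 - p = 0")
    case True then have "v = 1" unfolding p_def by simp
    then show ?thesis using True by simp
  next
    case False then have "1 - p > 0" using p0 by simp
    moreover have "1 - p = (1 - v) / 2" unfolding p_def by (simp add: field_simps)
    ultimately have "ln (1 - v) = ln (2 * (1 - p))" by simp
    also have "\<dots> = ln 2 + ln (1 - p)" using \<open>1 - p > 0\<close> ln_mult[of 2 "1-p"] by (simp del: ln_mult)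
    finally have "ln (1 - v) = ln 2 + ln (1 - p)" .
    moreover have "1/2 * (1 - v) = 1 - p" unfolding p_def by (simp add: field_simps)
    ultimately show ?thesis by (metis distrib_left)
  qed
  have "Ient v = p * ln 2 + p * ln p + ((1 - p) * ln 2 + (1 - p) * ln (1 - p))"
    unfolding Ient_def using I1 I2 by linarith
  also have "\<dots> = ln 2 + p * ln p + (1 - p) * ln (1 - p)" by (simp add: algebra_simps)
  finally have h1: "Ient v = ln 2 + p * ln p + (1 - p) * ln (1 - p)" .
  have h2: "ln (Ef u / 2) = ln (Ef u) - ln 2" using E by (simp add: ln_div)
  have h3: "p * ln (p / a) = p * ln p - p * (u - ln (Ef u))" using ln_split[OF p0(1) a0] la by simp
  have h4: "(1 - p) * ln ((1 - p) / (1 - a)) = (1 - p) * ln (1 - p) - (1 - p) * (- u - ln (Ef u))"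
    using ln_split[OF p0(2) b0] lb by simp
  have h5: "v * u = (2 * p - 1) * u" unfolding p_def by (simp add: field_simps)
  have h6: "p * (u - ln (Ef u)) + (1 - p) * (- u - ln (Ef u)) = (2 * p - 1) * u - ln (Ef u)"
    by (simp add: algebra_simps)
  show ?thesis using h1 h2 h3 h4 h5 h6 by linarith
qed

lemma fenchel:
  fixes v u :: real assumes "\<bar>v\<bar> \<le> 1"
  shows "Ient v + ln (Ef u / 2) - v * u \<ge> 0"
proof -
  define p where "p = (1 + v) / 2"
  define a where "a = exp u / Ef u"
  have E: "Ef u > 0" by (rule Ef_pos)
  have a0: "a > 0" unfolding a_def using E by simp
  have b: "1 - a = exp (-u) / Ef u" unfolding a_def using E by (simp add: Ef_def field_simps)
  have b0: "1 - a > 0" using b E by simp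
  have p0: "p \<ge> 0" "1 - p \<ge> 0" using assms unfolding p_def by auto
  have "p - a \<le> p * ln (p / a)" by (rule kl_term(1)[OF p0(1) a0])
  moreover have "(1 - p) - (1 - a) \<le> (1 - p) * ln ((1 - p) / (1 - a))" by (rule kl_term(1)[OF p0(2) b0])
  ultimately show ?thesis using kl_identity[OF assms, of u] unfolding p_def a_def by linarith
qed

lemma fenchel_upper:
  fixes v w :: real assumes "\<bar>v\<bar> \<le> 1" "\<bar>w\<bar> < 1"
  shows "Ient v + ln (Ef (artanh w) / 2) - v * artanh w \<le> (v - w)^2 / (1 - w^2)"
proof -
  define u where "u = artanh w"
  define p where "p = (1 + v) / 2"
  define a where "a = exp u / Ef u"
  have E: "Ef u > 0" by (rule Ef_pos)
  have w1: "1 + w > 0" "1 - w > 0" using assms by auto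
  have e2: "exp (2 * u) = (1 + w) / (1 - w)" unfolding u_def artanh_def using w1 by simp
  have "a = exp (2*u) / (exp (2*u) + 1)"
    unfolding a_def Ef_def by (simp add: field_simps exp_minus mult_exp_exp[symmetric] flip: exp_add)
  also have "\<dots> = (1 + w) / 2" unfolding e2 using w1 by (simp add: field_simps)
  finally have aw: "a = (1 + w) / 2" .
  have a0: "a > 0" "1 - a > 0" using aw w1 by auto
  have p0: "p \<ge> 0" "1 - p \<ge> 0" using assms unfolding p_def by auto
  have "p * ln (p / a) \<le> p * (p - a) / a" by (rule kl_term(2)[OF p0(1) a0(1)])
  moreover have "(1 - p) * ln ((1 - p) / (1 - a)) \<le> (1 - p) * ((1 - p) - (1 - a)) / (1 - a)"
    by (rule kl_term(2)[OF p0(2) a0(2)])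
  moreover have "p * (p - a) / a + (1 - p) * ((1 - p) - (1 - a)) / (1 - a) = (v - w)^2 / (1 - w^2)"
  proof -
    have ww: "1 - w * w > 0" using assms(2) abs_square_less_1[of w] by (simp add: power2_eq_square)
    show ?thesis unfolding aw p_def using w1 ww by (simp add: field_simps power2_eq_square)
  qed
  ultimately show ?thesis using kl_identity[OF assms(1), of u] unfolding p_def a_def u_def by linarith
qed


definition Qf :: "real \<Rightarrow> real \<Rightarrow> real \<times> real \<Rightarrow> real" where
  "Qf \<alpha> \<beta> x = 1/2 * (1/4 * \<beta> * (fst x)^2 + 1/4 * \<beta> * (snd x)^2 + 1/2 * \<alpha> * fst x * snd x)"

lemma Gamma_Qf: "Gamma_fn \<alpha> \<beta> x = Qf \<alpha> \<beta> x - 1/2 * Ient (fst x) - 1/2 * Ient (snd x)"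
  unfolding Gamma_fn_def Qf_def by simp

lemma block_sum:
  assumes "finite A" "S \<subseteq> A"
  shows "(\<Sum>i\<in>A. \<Sum>j\<in>A. if same_block S i j then g i j else h i j) =
    (\<Sum>i\<in>S. \<Sum>j\<in>S. g i j) + (\<Sum>i\<in>S. \<Sum>j\<in>A - S. h i j) + (\<Sum>i\<in>A - S. \<Sum>j\<in>S. h i j)
    + (\<Sum>i\<in>A - S. \<Sum>j\<in>A - S. g i j)"
proof -
  have fS: "finite S" using assms finite_subset by blast
  have split: "\<And>f::nat\<Rightarrow>'a::comm_monoid_add. sum f A = sum f S + sum f (A - S)"
    using sum.subset_diff[OF assms(2) assms(1)] by (simp add: add.commute)
  have "(\<Sum>i\<in>A. \<Sum>j\<in>A. if same_block S i j then g i j else h i j)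
      = (\<Sum>i\<in>A. (\<Sum>j\<in>S. if same_block S i j then g i j else h i j) + (\<Sum>j\<in>A - S. if same_block S i j then g i j else h i j))"
    by (subst split) rule
  also have "\<dots> = (\<Sum>i\<in>S. (\<Sum>j\<in>S. if same_block S i j then g i j else h i j) + (\<Sum>j\<in>A - S. if same_block S i j then g i j else h i j))
     + (\<Sum>i\<in>A - S. (\<Sum>j\<in>S. if same_block S i j then g i j else h i j) + (\<Sum>j\<in>A - S. if same_block S i j then g i j else h i j))"
    by (rule split)
  also have "\<dots> = (\<Sum>i\<in>S. (\<Sum>j\<in>S. g i j) + (\<Sum>j\<in>A - S. h i j)) + (\<Sum>i\<in>A - S. (\<Sum>j\<in>S. h i j) + (\<Sum>j\<in>A - S. g i j))"
    by (intro arg_cong2[where f="(+)"] sum.cong refl arg_cong2[where f="(+)"]) (auto simp: same_block_def)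
  finally show ?thesis by (simp add: sum.distrib algebra_simps)
qed

definition S1 :: "nat set \<Rightarrow> (nat \<Rightarrow> real) \<Rightarrow> real" where "S1 S \<sigma> = (\<Sum>i\<in>S. \<sigma> i)"

lemma magn_S1: "magn N S \<sigma> = (2 / real N * S1 S \<sigma>, 2 / real N * S1 ({1..N} - S) \<sigma>)"
  unfolding magn_def S1_def by simp

lemma ham_Q:
  assumes "S \<subseteq> {1..N}" "N > 0"
  shows "- hamiltonian N \<alpha> \<beta> S \<sigma> = real N * Qf \<alpha> \<beta> (magn N S \<sigma>)"
proof -
  let ?A = "{1..N}" let ?a = "S1 S \<sigma>" let ?b = "S1 ({1..N} - S) \<sigma>"
  have e1: "(\<Sum>i\<in>?A. \<Sum>j\<in>?A. if same_block S i j then \<sigma> i * \<sigma> j else 0) = ?a^2 + ?b^2"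
    using block_sum[OF _ assms(1), of "\<lambda>i j. \<sigma> i * \<sigma> j" "\<lambda>i j. 0"]
    by (simp add: S1_def power2_eq_square sum_product)
  have e2: "(\<Sum>i\<in>?A. \<Sum>j\<in>?A. if same_block S i j then 0 else \<sigma> i * \<sigma> j) = 2 * ?a * ?b"
    using block_sum[OF _ assms(1), of "\<lambda>i j. 0" "\<lambda>i j. \<sigma> i * \<sigma> j"]
      sum_product[of \<sigma> S \<sigma> "{1..N} - S"] sum_product[of \<sigma> "{1..N} - S" \<sigma> S]
    by (simp add: S1_def mult.commute)
  show ?thesis unfolding hamiltonian_def e1 e2 magn_S1 Qf_def using assms(2)
    by (simp add: field_simps power2_eq_square)
qed

lemma factorization:
  assumes "S \<subseteq> {1..N}"
  shows "(\<Sum>\<sigma>\<in>configs N. exp (u1 * S1 S \<sigma> + u2 * S1 ({1..N} - S) \<sigma>))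
     = Ef u1 ^ card S * Ef u2 ^ card ({1..N} - S)"
proof -
  let ?A = "{1..N}"
  define c where "c i = (if i \<in> S then u1 else u2)" for i
  have fS: "finite S" using assms finite_subset by blast
  have lin: "u1 * S1 S \<sigma> + u2 * S1 (?A - S) \<sigma> = (\<Sum>i\<in>?A. c i * \<sigma> i)" for \<sigma>
  proof -
    have "(\<Sum>i\<in>?A. c i * \<sigma> i) = (\<Sum>i\<in>?A - S. c i * \<sigma> i) + (\<Sum>i\<in>S. c i * \<sigma> i)"
      by (rule sum.subset_diff[OF assms]) simp
    also have "\<dots> = (\<Sum>i\<in>?A - S. u2 * \<sigma> i) + (\<Sum>i\<in>S. u1 * \<sigma> i)"
      by (intro arg_cong2[where f="(+)"] sum.cong) (auto simp: c_def)
    finally show ?thesis by (simp add: S1_def sum_distrib_left)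
  qed
  have "(\<Sum>\<sigma>\<in>configs N. exp (u1 * S1 S \<sigma> + u2 * S1 (?A - S) \<sigma>))
      = (\<Sum>\<sigma>\<in>PiE ?A (\<lambda>_. {-1, 1}). \<Prod>i\<in>?A. exp (c i * \<sigma> i))"
    unfolding configs_def lin by (simp add: exp_sum)
  also have "\<dots> = (\<Prod>i\<in>?A. \<Sum>y\<in>{-1,1}. exp (c i * y))"
    by (rule prod_sum_PiE[symmetric]) auto
  also have "\<dots> = (\<Prod>i\<in>?A. Ef (c i))" by (simp add: Ef_def add.commute)
  also have "\<dots> = (\<Prod>i\<in>?A - S. Ef (c i)) * (\<Prod>i\<in>S. Ef (c i))"
    by (rule prod.subset_diff[OF assms]) simp
  also have "\<dots> = (\<Prod>i\<in>?A - S. Ef u2) * (\<Prod>i\<in>S. Ef u1)"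
    by (intro arg_cong2[where f="(*)"] prod.cong) (auto simp: c_def)
  finally show ?thesis by simp
qed

lemma admissible_card:
  assumes "admissible N S"
  shows "N = 2 * (N div 2)" "card S = N div 2" "card ({1..N} - S) = N div 2" "S \<subseteq> {1..N}"
proof -
  show "N = 2 * (N div 2)" using assms unfolding admissible_def by simp
  show "card S = N div 2" "S \<subseteq> {1..N}" using assms unfolding admissible_def by auto
  have "card ({1..N} - S) = card {1..N} - card S"
    using assms unfolding admissible_def by (intro card_Diff_subset) (auto intro: finite_subset)
  then show "card ({1..N} - S) = N div 2" using assms unfolding admissible_def by auto
qed

lemma Ef_pow: "Ef u ^ n = 2 ^ n * exp (real n * ln (Ef u / 2))"
proof -
  have "Ef u ^ n = (2 * (Ef u / 2)) ^ n" by simp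
  also have "\<dots> = 2 ^ n * (Ef u / 2) ^ n" by (simp only: power_mult_distrib)
  also have "\<dots> = 2 ^ n * exp (ln (Ef u / 2)) ^ n" using Ef_pos[of u] by simp
  also have "\<dots> = 2 ^ n * exp (real n * ln (Ef u / 2))" by (simp add: exp_of_nat_mult)
  finally show ?thesis .
qed

lemma Q_tangent:
  assumes "0 \<le> \<alpha>" "\<alpha> \<le> \<beta>"
  shows "Qf \<alpha> \<beta> m \<ge> Qf \<alpha> \<beta> z + (\<beta> * fst z / 4 + \<alpha> * snd z / 4) * (fst m - fst z)
          + (\<beta> * snd z / 4 + \<alpha> * fst z / 4) * (snd m - snd z)"
proof -
  define d1 where "d1 = fst m - fst z" define d2 where "d2 = snd m - snd z"
  have "Qf \<alpha> \<beta> m - (Qf \<alpha> \<beta> z + (\<beta> * fst z / 4 + \<alpha> * snd z / 4) * (fst m - fst z)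
          + (\<beta> * snd z / 4 + \<alpha> * fst z / 4) * (snd m - snd z))
       = (\<beta> - \<alpha>) / 8 * (d1^2 + d2^2) + \<alpha> / 8 * (d1 + d2)^2"
    unfolding Qf_def d1_def d2_def by (simp add: power2_eq_square field_simps; algebra)
  moreover have "(\<beta> - \<alpha>) / 8 * (d1^2 + d2^2) + \<alpha> / 8 * (d1 + d2)^2 \<ge> 0"
    using assms by (intro add_nonneg_nonneg mult_nonneg_nonneg) auto
  ultimately show ?thesis by linarith
qed

lemma Z_lower:
  assumes adm: "admissible N S" and N: "N > 0" and "0 \<le> \<alpha>" "\<alpha> \<le> \<beta>"
    and z: "\<bar>fst z\<bar> \<le> 1" "\<bar>snd z\<bar> \<le> 1"
  shows "partition_fn N \<alpha> \<beta> S \<ge> 2 ^ N * exp (real N * Gamma_fn \<alpha> \<beta> z)"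
proof -
  define n where "n = N div 2"
  have Nn: "real N = 2 * real n" using admissible_card(1)[OF adm] unfolding n_def
    by (metis of_nat_mult of_nat_numeral)
  have n0: "real n > 0" using N Nn by simp
  have cS: "card S = n" "card ({1..N} - S) = n" using admissible_card[OF adm] unfolding n_def by auto
  have Ssub: "S \<subseteq> {1..N}" using admissible_card[OF adm] by simp
  define g1 where "g1 = \<beta> * fst z / 4 + \<alpha> * snd z / 4"
  define g2 where "g2 = \<beta> * snd z / 4 + \<alpha> * fst z / 4"
  define C where "C = real N * (Qf \<alpha> \<beta> z - g1 * fst z - g2 * snd z)"
  have w: "gibbs_weight N \<alpha> \<beta> S \<sigma> \<ge> exp (C + (2 * g1) * S1 S \<sigma> + (2 * g2) * S1 ({1..N} - S) \<sigma>)" for \<sigma>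
  proof -
    have "gibbs_weight N \<alpha> \<beta> S \<sigma> = exp (real N * Qf \<alpha> \<beta> (magn N S \<sigma>))"
      unfolding gibbs_weight_def using ham_Q[OF Ssub N] by simp
    moreover have "real N * Qf \<alpha> \<beta> (magn N S \<sigma>) \<ge> C + (2 * g1) * S1 S \<sigma> + (2 * g2) * S1 ({1..N} - S) \<sigma>"
    proof -
      have "C + (2 * g1) * S1 S \<sigma> + (2 * g2) * S1 ({1..N} - S) \<sigma> = real N * (Qf \<alpha> \<beta> z + g1 * (fst (magn N S \<sigma>) - fst z)
          + g2 * (snd (magn N S \<sigma>) - snd z))"
        unfolding C_def magn_S1 fst_conv snd_conv using N by (simp add: field_simps)
      also have "\<dots> \<le> real N * Qf \<alpha> \<beta> (magn N S \<sigma>)"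
        using Q_tangent[OF assms(3,4), where m="magn N S \<sigma>" and z=z] N unfolding g1_def g2_def
        by (intro mult_left_mono) auto
      finally show ?thesis .
    qed
    ultimately show ?thesis by simp
  qed
  have "partition_fn N \<alpha> \<beta> S \<ge> (\<Sum>\<sigma>\<in>configs N. exp (C + (2 * g1) * S1 S \<sigma> + (2 * g2) * S1 ({1..N} - S) \<sigma>))"
    unfolding partition_fn_def by (rule sum_mono) (rule w)
  also have "(\<Sum>\<sigma>\<in>configs N. exp (C + (2 * g1) * S1 S \<sigma> + (2 * g2) * S1 ({1..N} - S) \<sigma>))
      = exp C * (\<Sum>\<sigma>\<in>configs N. exp ((2 * g1) * S1 S \<sigma> + (2 * g2) * S1 ({1..N} - S) \<sigma>))"
    by (simp add: sum_distrib_left add.assoc flip: exp_add)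
  also have "\<dots> = exp C * (Ef (2 * g1) ^ n * Ef (2 * g2) ^ n)"
    using factorization[OF Ssub] cS by simp
  also have "\<dots> = 2 ^ N * exp (C + real n * ln (Ef (2 * g1) / 2) + real n * ln (Ef (2 * g2) / 2))"
    unfolding Ef_pow using admissible_card(1)[OF adm] unfolding n_def
    by (simp add: exp_add power_add[symmetric] mult_2[symmetric])
  finally have Zg: "partition_fn N \<alpha> \<beta> S \<ge> 2 ^ N * exp (C + real n * ln (Ef (2 * g1) / 2) + real n * ln (Ef (2 * g2) / 2))" .
  have f1: "ln (Ef (2 * g1) / 2) \<ge> fst z * (2 * g1) - Ient (fst z)" using fenchel[OF z(1), of "2*g1"] by linarith
  have f2: "ln (Ef (2 * g2) / 2) \<ge> snd z * (2 * g2) - Ient (snd z)" using fenchel[OF z(2), of "2*g2"] by linarith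
  have "C + real n * ln (Ef (2 * g1) / 2) + real n * ln (Ef (2 * g2) / 2)
      \<ge> C + real n * (fst z * (2 * g1) - Ient (fst z)) + real n * (snd z * (2 * g2) - Ient (snd z))"
    using f1 f2 n0 by (intro add_mono mult_left_mono) auto
  moreover have "C + real n * (fst z * (2 * g1) - Ient (fst z)) + real n * (snd z * (2 * g2) - Ient (snd z))
      = real N * Gamma_fn \<alpha> \<beta> z"
    unfolding C_def Gamma_Qf Nn by (simp add: algebra_simps)
  ultimately show ?thesis using Zg
    by (smt (verit, best) exp_le_cancel_iff mult_left_mono zero_le_power)
qed


lemma xlnx_cont: "continuous_on {0..} (\<lambda>x::real. x * ln x)"
proof -
  have "continuous (at x within {0..}) (\<lambda>x::real. x * ln x)" if "x \<in> {0..}" for x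
  proof (cases "x = 0")
    case True
    have "((\<lambda>x::real. x * ln x) \<longlongrightarrow> 0) (at_right 0)" by real_asymp
    then show ?thesis using True by (simp add: continuous_within at_within_Ici_at_right)
  next
    case False then have "x > 0" using that by simp
    then have "isCont (\<lambda>x::real. x * ln x) x" by (intro continuous_intros) auto
    then show ?thesis by (rule continuous_at_imp_continuous_at_within)
  qed
  then show ?thesis by (simp add: continuous_on_eq_continuous_within)
qed

lemma Ient_cont: "continuous_on {-1..1} Ient"
proof -
  have c1: "continuous_on {-1..1} (\<lambda>z::real. (1 + z) * ln (1 + z))"
    by (rule continuous_on_compose2[OF xlnx_cont, of _ "\<lambda>z. 1 + z"]) (auto intro!: continuous_intros)
  have c2: "continuous_on {-1..1} (\<lambda>z::real. (1 - z) * ln (1 - z))"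
    by (rule continuous_on_compose2[OF xlnx_cont, of _ "\<lambda>z. 1 - z"]) (auto intro!: continuous_intros)
  have "continuous_on {-1..1} (\<lambda>z::real. 1/2 * ((1 + z) * ln (1 + z)) + 1/2 * ((1 - z) * ln (1 - z)))"
    by (intro continuous_on_add continuous_on_mult continuous_on_const c1 c2)
  then show ?thesis unfolding Ient_def[abs_def] by (simp add: mult.assoc)
qed

lemma Gamma_cont: "continuous_on square (Gamma_fn \<alpha> \<beta>)"
proof -
  have i1: "continuous_on square (\<lambda>x. Ient (fst x))"
    by (rule continuous_on_compose2[OF Ient_cont]) (auto simp: square_def intro!: continuous_intros)
  have i2: "continuous_on square (\<lambda>x. Ient (snd x))"
    by (rule continuous_on_compose2[OF Ient_cont]) (auto simp: square_def intro!: continuous_intros)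
  show ?thesis unfolding Gamma_fn_def[abs_def] using i1 i2 by (intro continuous_intros)
qed

lemma compact_square: "compact square"
  unfolding square_def by (intro compact_Times compact_Icc)

lemma poly_exp_eventually:
  assumes "\<delta> > 0"
  shows "\<exists>N0. \<forall>N\<ge>N0. (real N + 1)^2 \<le> exp (\<delta> * real N)"
proof -
  have "eventually (\<lambda>x::real. (x + 1)^2 \<le> exp (\<delta> * x)) at_top"
    using assms by real_asymp
  then obtain X where X: "\<And>x. x \<ge> X \<Longrightarrow> (x + 1)^2 \<le> exp (\<delta> * x)"
    by (auto simp: eventually_at_top_linorder)
  obtain N0 :: nat where "real N0 \<ge> X" using real_arch_simple by blast
  then show ?thesis using X by (intro exI[of _ N0]) auto
qed


lemma S1_int:
  assumes "\<sigma> \<in> configs N" "T \<subseteq> {1..N}"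
  shows "\<exists>k::int. S1 T \<sigma> = of_int k \<and> \<bar>k\<bar> \<le> int (card T)"
proof -
  define k where "k = (\<Sum>i\<in>T. if \<sigma> i = 1 then (1::int) else -1)"
  have s: "\<sigma> i = 1 \<or> \<sigma> i = -1" if "i \<in> T" for i
    using assms that unfolding configs_def by (auto simp: PiE_iff)
  have "S1 T \<sigma> = of_int k" unfolding S1_def k_def of_int_sum
    by (rule sum.cong) (use s in auto)
  moreover have "\<bar>k\<bar> \<le> (\<Sum>i\<in>T. \<bar>if \<sigma> i = 1 then (1::int) else -1\<bar>)" unfolding k_def by (rule sum_abs)
  moreover have "(\<Sum>i\<in>T. \<bar>if \<sigma> i = 1 then (1::int) else -1\<bar>) = (\<Sum>i\<in>T. 1)"
    by (rule sum.cong) auto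
  moreover have "(\<Sum>i\<in>T. (1::int)) = int (card T)" by simp
  ultimately show ?thesis by auto
qed

lemma magn_lattice:
  assumes adm: "admissible N S" and "\<sigma> \<in> configs N"
  shows "magn N S \<sigma> \<in> (\<lambda>(a,b). (of_int a / real (N div 2), of_int b / real (N div 2))) `
           ({- int (N div 2)..int (N div 2)} \<times> {- int (N div 2)..int (N div 2)})"
    and "magn N S \<sigma> \<in> square"
proof -
  define n where "n = N div 2"
  have Nn: "real N = 2 * real n" using admissible_card(1)[OF adm] unfolding n_def
    by (metis of_nat_mult of_nat_numeral)
  have cS: "card S = n" "card ({1..N} - S) = n" using admissible_card[OF adm] unfolding n_def by auto
  have Ssub: "S \<subseteq> {1..N}" using admissible_card[OF adm] by simp
  obtain a where a: "S1 S \<sigma> = of_int a" "\<bar>a\<bar> \<le> int n" using S1_int[OF assms(2) Ssub] cS by auto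
  obtain b where b: "S1 ({1..N} - S) \<sigma> = of_int b" "\<bar>b\<bar> \<le> int n"
    using S1_int[OF assms(2), of "{1..N} - S"] cS by auto
  have m: "magn N S \<sigma> = (of_int a / real n, of_int b / real n)"
    unfolding magn_S1 a(1) b(1) Nn by simp
  show "magn N S \<sigma> \<in> (\<lambda>(a,b). (of_int a / real (N div 2), of_int b / real (N div 2))) `
           ({- int (N div 2)..int (N div 2)} \<times> {- int (N div 2)..int (N div 2)})"
    unfolding m n_def[symmetric] using a(2) b(2) by (intro image_eqI[of _ _ "(a,b)"]) auto
  have ab: "\<bar>real_of_int a\<bar> \<le> real n" "\<bar>real_of_int b\<bar> \<le> real n" using a(2) b(2) by linarith+
  have dv: "\<bar>x / real n\<bar> \<le> 1" if "\<bar>x\<bar> \<le> real n" for x :: real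
  proof (cases "n = 0")
    case False
    have "\<bar>x / real n\<bar> = \<bar>x\<bar> / real n" by simp
    then show ?thesis using False that by (simp add: divide_le_eq_1)
  qed simp
  have h1: "\<bar>of_int a / real n\<bar> \<le> 1" using dv ab(1) by blast
  have h2: "\<bar>of_int b / real n\<bar> \<le> 1" using dv ab(2) by blast
  show "magn N S \<sigma> \<in> square" unfolding m square_def
    using abs_le_D1[OF h1] abs_le_D2[OF h1] abs_le_D1[OF h2] abs_le_D2[OF h2] by auto
qed

lemma card_magn_image:
  assumes adm: "admissible N S" and "A \<subseteq> configs N"
  shows "real (card (magn N S ` A)) \<le> (real N + 1)^2"
proof -
  define n where "n = N div 2"
  define L where "L = (\<lambda>(a,b). (of_int a / real n, of_int b / real n)) ` ({- int n..int n} \<times> {- int n..int n})"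
  have sub: "magn N S ` A \<subseteq> L"
  proof
    fix y assume "y \<in> magn N S ` A"
    then obtain \<sigma> where "\<sigma> \<in> A" "y = magn N S \<sigma>" by auto
    then show "y \<in> L" using magn_lattice(1)[OF adm, of \<sigma>] assms(2) unfolding L_def n_def by auto
  qed
  have finL: "finite L" unfolding L_def by simp
  have "card (magn N S ` A) \<le> card L" by (rule card_mono[OF finL sub])
  also have "card L \<le> card ({- int n..int n} \<times> {- int n..int n})" unfolding L_def by (rule card_image_le) simp
  also have "\<dots> = (2 * n + 1) * (2 * n + 1)" by (simp add: card_cartesian_product) (simp add: nat_add_distrib nat_mult_distrib)
  finally have "card (magn N S ` A) \<le> (N + 1) * (N + 1)"
    using admissible_card(1)[OF adm] unfolding n_def by simp
  then have "real (card (magn N S ` A)) \<le> real ((N + 1) * (N + 1))" by linarith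
  moreover have "real ((N + 1) * (N + 1)) = (real N + 1)^2" unfolding power2_eq_square by (simp add: algebra_simps)
  ultimately show ?thesis by linarith
qed


lemma wb_lemma:
  fixes x \<eta> :: real
  assumes eta: "0 < \<eta>" "\<eta> \<le> 1" and x: "\<bar>x\<bar> \<le> 1"
  shows "\<bar>(1 - \<eta>) * x\<bar> < 1" "(x - (1 - \<eta>) * x)^2 / (1 - ((1 - \<eta>) * x)^2) \<le> \<eta>"
proof -
  have x2: "x^2 \<le> 1" using x by (simp add: abs_square_le_1)
  have aw: "\<bar>(1 - \<eta>) * x\<bar> \<le> 1 - \<eta>" using x eta by (simp add: abs_mult mult_left_le)
  then show "\<bar>(1 - \<eta>) * x\<bar> < 1" using eta by simp
  have sq: "((1 - \<eta>) * x)^2 = (1 - \<eta>)^2 * x^2" by (simp add: power_mult_distrib)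
  have "(1 - \<eta>)^2 * x^2 \<le> (1 - \<eta>)^2 * 1" using x2 by (intro mult_left_mono) auto
  moreover have "(1 - \<eta>) * (1 - \<eta>) \<le> 1 * (1 - \<eta>)" using eta by (intro mult_right_mono) auto
  ultimately have den: "1 - ((1 - \<eta>) * x)^2 \<ge> \<eta>" unfolding sq by (simp add: power2_eq_square)
  have "x - (1 - \<eta>) * x = \<eta> * x" by (simp add: algebra_simps)
  then have "(x - (1 - \<eta>) * x)^2 = \<eta>^2 * x^2" by (simp add: power_mult_distrib)
  also have "\<dots> \<le> \<eta>^2 * 1" using x2 by (intro mult_left_mono) auto
  finally have num: "(x - (1 - \<eta>) * x)^2 \<le> \<eta>^2" by simp
  have "(x - (1 - \<eta>) * x)^2 / (1 - ((1 - \<eta>) * x)^2) \<le> \<eta>^2 / \<eta>"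
    using den num eta by (intro frac_le) auto
  also have "\<dots> = \<eta>" using eta by (simp add: power2_eq_square)
  finally show "(x - (1 - \<eta>) * x)^2 / (1 - ((1 - \<eta>) * x)^2) \<le> \<eta>" .
qed

lemma count_bound:
  assumes adm: "admissible N S" and N: "N > 0" and v: "\<bar>fst v\<bar> \<le> 1" "\<bar>snd v\<bar> \<le> 1"
    and eta: "0 < \<eta>" "\<eta> \<le> 1"
  shows "real (card {\<sigma>\<in>configs N. magn N S \<sigma> = v}) * exp (real N * Qf \<alpha> \<beta> v)
          \<le> 2 ^ N * exp (real N * (Gamma_fn \<alpha> \<beta> v + \<eta>))"
proof -
  define n where "n = N div 2"
  have Nn: "real N = 2 * real n" using admissible_card(1)[OF adm] unfolding n_def
    by (metis of_nat_mult of_nat_numeral)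
  have n0: "real n > 0" using N Nn by simp
  have cS: "card S = n" "card ({1..N} - S) = n" using admissible_card[OF adm] unfolding n_def by auto
  have Ssub: "S \<subseteq> {1..N}" using admissible_card[OF adm] by simp
  define w1 where "w1 = (1 - \<eta>) * fst v" define w2 where "w2 = (1 - \<eta>) * snd v"
  define u1 where "u1 = artanh w1" define u2 where "u2 = artanh w2"
  have w1b: "\<bar>w1\<bar> < 1" "(fst v - w1)^2 / (1 - w1^2) \<le> \<eta>" using wb_lemma[OF eta v(1)] unfolding w1_def by auto
  have w2b: "\<bar>w2\<bar> < 1" "(snd v - w2)^2 / (1 - w2^2) \<le> \<eta>" using wb_lemma[OF eta v(2)] unfolding w2_def by auto
  have f1: "ln (Ef u1 / 2) - fst v * u1 \<le> - Ient (fst v) + \<eta>"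
    using fenchel_upper[OF v(1) w1b(1)] w1b(2) unfolding u1_def by linarith
  have f2: "ln (Ef u2 / 2) - snd v * u2 \<le> - Ient (snd v) + \<eta>"
    using fenchel_upper[OF v(2) w2b(1)] w2b(2) unfolding u2_def by linarith
  define D where "D = u1 * (real n * fst v) + u2 * (real n * snd v)"
  let ?T = "{\<sigma>\<in>configs N. magn N S \<sigma> = v}"
  have fin: "finite (configs N)" unfolding configs_def by (intro finite_PiE) auto
  have "real (card ?T) = (\<Sum>\<sigma>\<in>?T. exp (u1 * S1 S \<sigma> + u2 * S1 ({1..N} - S) \<sigma> - D))"
  proof -
    have "exp (u1 * S1 S \<sigma> + u2 * S1 ({1..N} - S) \<sigma> - D) = 1" if "\<sigma> \<in> ?T" for \<sigma>
    proof -
      have "magn N S \<sigma> = v" using that by simp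
      then have "S1 S \<sigma> = real n * fst v" "S1 ({1..N} - S) \<sigma> = real n * snd v"
        unfolding magn_S1 Nn using n0 by (auto simp: field_simps)
      then show ?thesis unfolding D_def by simp
    qed
    then show ?thesis by simp
  qed
  also have "\<dots> \<le> (\<Sum>\<sigma>\<in>configs N. exp (u1 * S1 S \<sigma> + u2 * S1 ({1..N} - S) \<sigma> - D))"
    by (rule sum_mono2[OF fin]) auto
  also have "\<dots> = exp (- D) * (\<Sum>\<sigma>\<in>configs N. exp (u1 * S1 S \<sigma> + u2 * S1 ({1..N} - S) \<sigma>))"
  proof -
    have "exp (x - D) = exp (- D) * exp x" for x by (simp add: exp_diff exp_minus field_simps)
    then show ?thesis by (simp add: sum_distrib_left)
  qed
  also have "\<dots> = exp (- D) * (Ef u1 ^ n * Ef u2 ^ n)" using factorization[OF Ssub] cS by simp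
  also have "\<dots> = 2 ^ N * exp (real n * (ln (Ef u1 / 2) - fst v * u1) + real n * (ln (Ef u2 / 2) - snd v * u2))"
  proof -
    have "exp (- D) * (Ef u1 ^ n * Ef u2 ^ n) = (2 ^ n * 2 ^ n) * exp (- D + real n * ln (Ef u1 / 2) + real n * ln (Ef u2 / 2))"
      unfolding Ef_pow by (simp only: exp_add mult_ac)
    moreover have "(2::real) ^ n * 2 ^ n = 2 ^ N" using admissible_card(1)[OF adm] unfolding n_def
      by (metis mult_2 power_add)
    moreover have "- D + real n * ln (Ef u1 / 2) + real n * ln (Ef u2 / 2) =
        real n * (ln (Ef u1 / 2) - fst v * u1) + real n * (ln (Ef u2 / 2) - snd v * u2)"
      unfolding D_def by (simp add: algebra_simps)
    ultimately show ?thesis by simp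
  qed
  also have "\<dots> \<le> 2 ^ N * exp (real n * (- Ient (fst v) + \<eta>) + real n * (- Ient (snd v) + \<eta>))"
    using f1 f2 n0 by (intro mult_left_mono exp_mono add_mono) auto
  finally have c: "real (card ?T) \<le> 2 ^ N * exp (real n * (- Ient (fst v) + \<eta>) + real n * (- Ient (snd v) + \<eta>))" .
  have "real (card ?T) * exp (real N * Qf \<alpha> \<beta> v) \<le>
     2 ^ N * exp (real n * (- Ient (fst v) + \<eta>) + real n * (- Ient (snd v) + \<eta>)) * exp (real N * Qf \<alpha> \<beta> v)"
    using c by (intro mult_right_mono) auto
  also have "\<dots> = 2 ^ N * exp (real n * (- Ient (fst v) + \<eta>) + real n * (- Ient (snd v) + \<eta>) + real N * Qf \<alpha> \<beta> v)"
    by (simp only: mult.assoc exp_add)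
  also have "real n * (- Ient (fst v) + \<eta>) + real n * (- Ient (snd v) + \<eta>) + real N * Qf \<alpha> \<beta> v
      = real N * (Gamma_fn \<alpha> \<beta> v + \<eta>)"
    unfolding Gamma_Qf Nn by (simp add: algebra_simps)
  finally show ?thesis .
qed

lemma numer_bound:
  assumes adm: "admissible N S" and N: "N > 0" and eta: "0 < \<eta>" "\<eta> \<le> 1"
    and G: "\<And>\<sigma>. \<sigma> \<in> configs N \<Longrightarrow> \<not> P \<sigma> \<Longrightarrow> Gamma_fn \<alpha> \<beta> (magn N S \<sigma>) \<le> G0"
    and Pm: "\<And>\<sigma> \<sigma>'. magn N S \<sigma> = magn N S \<sigma>' \<Longrightarrow> P \<sigma> = P \<sigma>'"
  shows "(\<Sum>\<sigma>\<in>{\<sigma>\<in>configs N. \<not> P \<sigma>}. gibbs_weight N \<alpha> \<beta> S \<sigma>)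
          \<le> (real N + 1)^2 * (2 ^ N * exp (real N * (G0 + \<eta>)))"
proof -
  let ?A = "{\<sigma>\<in>configs N. \<not> P \<sigma>}"
  have fin: "finite (configs N)" unfolding configs_def by (intro finite_PiE) auto
  have finA: "finite ?A" using fin by simp
  have Ssub: "S \<subseteq> {1..N}" using admissible_card[OF adm] by simp
  have gw: "gibbs_weight N \<alpha> \<beta> S \<sigma> = exp (real N * Qf \<alpha> \<beta> (magn N S \<sigma>))" for \<sigma>
    unfolding gibbs_weight_def using ham_Q[OF Ssub N] by simp
  have "(\<Sum>\<sigma>\<in>?A. gibbs_weight N \<alpha> \<beta> S \<sigma>)
      = (\<Sum>y\<in>magn N S ` ?A. \<Sum>\<sigma>\<in>{x\<in>?A. magn N S x = y}. gibbs_weight N \<alpha> \<beta> S \<sigma>)"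
    by (rule sum.image_gen[OF finA])
  also have "\<dots> \<le> (\<Sum>y\<in>magn N S ` ?A. 2 ^ N * exp (real N * (G0 + \<eta>)))"
  proof (rule sum_mono)
    fix y assume y: "y \<in> magn N S ` ?A"
    then obtain \<sigma>0 where s0: "\<sigma>0 \<in> configs N" "\<not> P \<sigma>0" "y = magn N S \<sigma>0" by auto
    have ysq: "y \<in> square" using magn_lattice(2)[OF adm s0(1)] s0(3) by simp
    then have yb: "\<bar>fst y\<bar> \<le> 1" "\<bar>snd y\<bar> \<le> 1" unfolding square_def by auto
    have "(\<Sum>\<sigma>\<in>{x\<in>?A. magn N S x = y}. gibbs_weight N \<alpha> \<beta> S \<sigma>)
        = (\<Sum>\<sigma>\<in>{x\<in>?A. magn N S x = y}. exp (real N * Qf \<alpha> \<beta> y))" by (rule sum.cong) (auto simp: gw)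
    also have "\<dots> = real (card {x\<in>?A. magn N S x = y}) * exp (real N * Qf \<alpha> \<beta> y)" by simp
    also have "\<dots> \<le> real (card {\<sigma>\<in>configs N. magn N S \<sigma> = y}) * exp (real N * Qf \<alpha> \<beta> y)"
      by (intro mult_right_mono) (auto intro!: card_mono simp: fin)
    also have "\<dots> \<le> 2 ^ N * exp (real N * (Gamma_fn \<alpha> \<beta> y + \<eta>))"
      by (rule count_bound[OF adm N yb eta])
    also have "\<dots> \<le> 2 ^ N * exp (real N * (G0 + \<eta>))"
      using G[OF s0(1,2)] s0(3) by (intro mult_left_mono exp_mono) auto
    finally show "(\<Sum>\<sigma>\<in>{x\<in>?A. magn N S x = y}. gibbs_weight N \<alpha> \<beta> S \<sigma>) \<le> 2 ^ N * exp (real N * (G0 + \<eta>))" .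
  qed
  also have "\<dots> = real (card (magn N S ` ?A)) * (2 ^ N * exp (real N * (G0 + \<eta>)))" by simp
  also have "\<dots> \<le> (real N + 1)^2 * (2 ^ N * exp (real N * (G0 + \<eta>)))"
    by (intro mult_right_mono card_magn_image[OF adm]) auto
  finally show ?thesis .
qed


lemma Ient_deriv:
  assumes "\<bar>z\<bar> < 1"
  shows "(Ient has_real_derivative artanh z) (at z)"
proof -
  have p: "1 + z > 0" "1 - z > 0" using assms by auto
  have d1: "((\<lambda>s. (1 + s) * ln (1 + s)) has_real_derivative (ln (1 + z) + 1)) (at z)"
    using p by (auto intro!: derivative_eq_intros)
  have d2: "((\<lambda>s. (1 - s) * ln (1 - s)) has_real_derivative (- ln (1 - z) - 1)) (at z)"
    using p by (auto intro!: derivative_eq_intros)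
  have D: "((\<lambda>s. 1/2 * ((1 + s) * ln (1 + s)) + 1/2 * ((1 - s) * ln (1 - s))) has_real_derivative
      (1/2 * (ln (1 + z) + 1) + 1/2 * (- ln (1 - z) - 1))) (at z)"
    by (intro DERIV_add DERIV_cmult d1 d2)
  have eqf: "(\<lambda>s. 1/2 * ((1 + s) * ln (1 + s)) + 1/2 * ((1 - s) * ln (1 - s))) = Ient"
    by (rule ext) (simp add: Ient_def)
  have v: "1/2 * (ln (1 + z) + 1) + 1/2 * (- ln (1 - z) - 1) = artanh z"
  proof -
    have e3: "ln ((1 + z) / (1 - z)) = ln (1 + z) - ln (1 - z)" using p by (simp add: ln_div)
    show ?thesis unfolding artanh_def e3 by (simp add: algebra_simps)
  qed
  show ?thesis using D unfolding eqf v .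
qed

lemma Ient_0 [simp]: "Ient 0 = 0" by (simp add: Ient_def)

lemma Ient_even: "Ient (- z) = Ient z" by (simp add: Ient_def algebra_simps)

lemma artanh_gt:
  fixes z :: real assumes "0 < z" "z < 1"
  shows "artanh z > z"
proof -
  have "(\<lambda>t. artanh t - t) 0 < (\<lambda>t. artanh t - t) z"
  proof (rule DERIV_pos_imp_increasing_open[OF assms(1)])
    fix x :: real assume x: "0 < x" "x < z"
    then have x1: "\<bar>x\<bar> < 1" using assms by auto
    have "((\<lambda>t. artanh t - t) has_real_derivative (1 / (1 - x^2) - 1)) (at x)"
      using x1 by (auto intro!: derivative_eq_intros)
    moreover have "1 / (1 - x^2) - 1 > 0"
    proof -
      have "x^2 < 1" "x^2 > 0" using x1 x by (auto simp: abs_square_less_1)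
      then show ?thesis by (simp add: field_simps)
    qed
    ultimately show "\<exists>y. ((\<lambda>t. artanh t - t) has_real_derivative y) (at x) \<and> y > 0" by blast
  next
    show "continuous_on {0..z} (\<lambda>t. artanh t - t)"
      using assms by (intro continuous_intros) auto
  qed
  then show ?thesis by simp
qed

lemma abs_artanh_gt:
  fixes z :: real assumes "\<bar>z\<bar> < 1" "z \<noteq> 0"
  shows "\<bar>artanh z\<bar> > \<bar>z\<bar>"
proof (cases "z > 0")
  case True then show ?thesis using artanh_gt[of z] assms by auto
next
  case False
  then have "artanh (- z) > - z" using artanh_gt[of "-z"] assms by auto
  then show ?thesis using assms False by auto
qed

lemma Ient_gt_sq:
  fixes z :: real assumes "\<bar>z\<bar> \<le> 1" "z \<noteq> 0"
  shows "Ient z > z^2 / 2"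
proof -
  have pos: "Ient t > t^2 / 2" if "0 < t" "t \<le> 1" for t :: real
  proof -
    have "(\<lambda>s. Ient s - s^2/2) 0 < (\<lambda>s. Ient s - s^2/2) t"
    proof (rule DERIV_pos_imp_increasing_open[OF that(1)])
      fix x :: real assume x: "0 < x" "x < t"
      then have x1: "\<bar>x\<bar> < 1" using that by auto
      have "((\<lambda>s. Ient s - s^2/2) has_real_derivative (artanh x - x)) (at x)"
        using Ient_deriv[OF x1] by (auto intro!: derivative_eq_intros)
      moreover have "artanh x - x > 0" using artanh_gt[of x] x that by auto
      ultimately show "\<exists>y. ((\<lambda>s. Ient s - s^2/2) has_real_derivative y) (at x) \<and> y > 0" by blast
    next
      have "continuous_on {0..t} Ient" using continuous_on_subset[OF Ient_cont] that by auto
      then show "continuous_on {0..t} (\<lambda>s. Ient s - s^2/2)" by (intro continuous_intros) auto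
    qed
    then show ?thesis by simp
  qed
  show ?thesis
  proof (cases "z > 0")
    case True then show ?thesis using pos assms by auto
  next
    case False
    then have "Ient (-z) > (-z)^2/2" using pos[of "-z"] assms by auto
    then show ?thesis by (simp add: Ient_even)
  qed
qed

lemma Ient_ge_sq: "\<bar>z\<bar> \<le> 1 \<Longrightarrow> Ient z \<ge> z^2 / 2"
  using Ient_gt_sq[of z] by (cases "z = 0") auto

lemma part_i_max:
  assumes "0 \<le> \<alpha>" "\<alpha> \<le> \<beta>" "\<alpha> + \<beta> \<le> 2"
  shows "maximizers \<alpha> \<beta> = {(0, 0)}"
proof -
  have neg: "Gamma_fn \<alpha> \<beta> x \<le> 0" and strict: "x \<noteq> (0,0) \<Longrightarrow> Gamma_fn \<alpha> \<beta> x < 0" if "x \<in> square" for x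
  proof -
    obtain a b where x: "x = (a, b)" by (cases x)
    have ab: "\<bar>a\<bar> \<le> 1" "\<bar>b\<bar> \<le> 1" using that unfolding x square_def by auto
    have q: "1/2 * (1/4 * \<beta> * a^2 + 1/4 * \<beta> * b^2 + 1/2 * \<alpha> * a * b) \<le> a^2 / 4 + b^2 / 4"
    proof -
      have "\<alpha> * (a * b) \<le> \<alpha> * ((a^2 + b^2) / 2)"
      proof (intro mult_left_mono)
        have "0 \<le> (a - b)^2" by simp
        then show "a * b \<le> (a^2 + b^2) / 2" by (simp add: power2_eq_square algebra_simps)
      qed (rule assms(1))
      moreover have "(\<alpha> + \<beta>) * (a^2 + b^2) \<le> 2 * (a^2 + b^2)"
        using assms(3) by (intro mult_right_mono) auto
      ultimately show ?thesis by (simp add: field_simps power2_eq_square)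
    qed
    have G: "Gamma_fn \<alpha> \<beta> x = 1/2 * (1/4 * \<beta> * a^2 + 1/4 * \<beta> * b^2 + 1/2 * \<alpha> * a * b) - 1/2 * Ient a - 1/2 * Ient b"
      unfolding Gamma_fn_def x by simp
    show "Gamma_fn \<alpha> \<beta> x \<le> 0" using G q Ient_ge_sq[OF ab(1)] Ient_ge_sq[OF ab(2)] by linarith
    assume "x \<noteq> (0,0)"
    then have "a \<noteq> 0 \<or> b \<noteq> 0" unfolding x by auto
    then show "Gamma_fn \<alpha> \<beta> x < 0"
    proof
      assume "a \<noteq> 0"
      then show ?thesis using G q Ient_gt_sq[OF ab(1)] Ient_ge_sq[OF ab(2)] by linarith
    next
      assume "b \<noteq> 0"
      then show ?thesis using G q Ient_ge_sq[OF ab(1)] Ient_gt_sq[OF ab(2)] by linarith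
    qed
  qed
  have G0: "Gamma_fn \<alpha> \<beta> (0,0) = 0" unfolding Gamma_fn_def by simp
  have sq0: "(0,0) \<in> square" unfolding square_def by auto
  show ?thesis
  proof
    show "maximizers \<alpha> \<beta> \<subseteq> {(0, 0)}"
    proof
      fix x assume "x \<in> maximizers \<alpha> \<beta>"
      then have "x \<in> square" "Gamma_fn \<alpha> \<beta> (0,0) \<le> Gamma_fn \<alpha> \<beta> x" using sq0 unfolding maximizers_def by auto
      then show "x \<in> {(0,0)}" using strict[of x] G0 by force
    qed
    show "{(0, 0)} \<subseteq> maximizers \<alpha> \<beta>" using neg sq0 G0 unfolding maximizers_def by auto
  qed
qed

lemma part_i_crit:
  fixes \<alpha> \<beta> x1 x2 :: real
  assumes "0 \<le> \<alpha>" "0 \<le> \<beta>" "\<alpha> + \<beta> \<le> 2" "x1 \<in> {-1<..<1}" "x2 \<in> {-1<..<1}"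
  shows "(1/2 * \<beta> * x1 + 1/2 * \<alpha> * x2 = artanh x1 \<and> 1/2 * \<beta> * x2 + 1/2 * \<alpha> * x1 = artanh x2)
        \<longleftrightarrow> (x1 = 0 \<and> x2 = 0)"
proof
  assume "x1 = 0 \<and> x2 = 0" then show "1/2 * \<beta> * x1 + 1/2 * \<alpha> * x2 = artanh x1 \<and> 1/2 * \<beta> * x2 + 1/2 * \<alpha> * x1 = artanh x2" by simp
next
  assume eq: "1/2 * \<beta> * x1 + 1/2 * \<alpha> * x2 = artanh x1 \<and> 1/2 * \<beta> * x2 + 1/2 * \<alpha> * x1 = artanh x2"
  have b: "\<bar>x1\<bar> < 1" "\<bar>x2\<bar> < 1" using assms(4,5) by auto
  have ge: "\<bar>artanh x\<bar> \<ge> \<bar>x\<bar>" if "\<bar>x\<bar> < 1" for x :: real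
    using abs_artanh_gt[OF that] by (cases "x = 0") auto
  have t1: "\<bar>artanh x1\<bar> \<le> 1/2 * \<beta> * \<bar>x1\<bar> + 1/2 * \<alpha> * \<bar>x2\<bar>"
  proof -
    have "\<bar>artanh x1\<bar> = \<bar>1/2 * \<beta> * x1 + 1/2 * \<alpha> * x2\<bar>" using eq by simp
    also have "\<dots> \<le> \<bar>1/2 * \<beta> * x1\<bar> + \<bar>1/2 * \<alpha> * x2\<bar>" by (rule abs_triangle_ineq)
    also have "\<dots> = 1/2 * \<beta> * \<bar>x1\<bar> + 1/2 * \<alpha> * \<bar>x2\<bar>" using assms(1,2) by (simp add: abs_mult)
    finally show ?thesis .
  qed
  have t2: "\<bar>artanh x2\<bar> \<le> 1/2 * \<beta> * \<bar>x2\<bar> + 1/2 * \<alpha> * \<bar>x1\<bar>"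
  proof -
    have "\<bar>artanh x2\<bar> = \<bar>1/2 * \<beta> * x2 + 1/2 * \<alpha> * x1\<bar>" using eq by simp
    also have "\<dots> \<le> \<bar>1/2 * \<beta> * x2\<bar> + \<bar>1/2 * \<alpha> * x1\<bar>" by (rule abs_triangle_ineq)
    also have "\<dots> = 1/2 * \<beta> * \<bar>x2\<bar> + 1/2 * \<alpha> * \<bar>x1\<bar>" using assms(1,2) by (simp add: abs_mult)
    finally show ?thesis .
  qed
  have s: "1/2 * \<beta> * \<bar>x1\<bar> + 1/2 * \<alpha> * \<bar>x2\<bar> + (1/2 * \<beta> * \<bar>x2\<bar> + 1/2 * \<alpha> * \<bar>x1\<bar>) \<le> \<bar>x1\<bar> + \<bar>x2\<bar>"
  proof -
    have "(\<alpha> + \<beta>) * (\<bar>x1\<bar> + \<bar>x2\<bar>) \<le> 2 * (\<bar>x1\<bar> + \<bar>x2\<bar>)" using assms(3) by (intro mult_right_mono) auto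
    then show ?thesis by (simp add: algebra_simps)
  qed
  show "x1 = 0 \<and> x2 = 0"
  proof (rule ccontr)
    assume "\<not> (x1 = 0 \<and> x2 = 0)"
    then have "\<bar>artanh x1\<bar> + \<bar>artanh x2\<bar> > \<bar>x1\<bar> + \<bar>x2\<bar>"
      using abs_artanh_gt[OF b(1)] abs_artanh_gt[OF b(2)] ge[OF b(1)] ge[OF b(2)] by (cases "x1 = 0") auto
    then show False using t1 t2 s by linarith
  qed
qed


lemma artanh_lt_bound:
  fixes z :: real assumes "0 < z" "z < 1"
  shows "artanh z < z / (1 - z^2)"
proof -
  have "(\<lambda>t. t / (1 - t^2) - artanh t) 0 < (\<lambda>t. t / (1 - t^2) - artanh t) z"
  proof (rule DERIV_pos_imp_increasing_open[OF assms(1)])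
    fix x :: real assume x: "0 < x" "x < z"
    then have x1: "\<bar>x\<bar> < 1" using assms by auto
    have "x^2 < 1" using x1 abs_square_less_1 by blast
    then have nz: "1 - x^2 \<noteq> 0" "1 - x^2 > 0" by auto
    have "((\<lambda>t. t / (1 - t^2) - artanh t) has_real_derivative
        ((1 * (1 - x^2) - x * (- (2 * x))) / (1 - x^2)^2 - 1 / (1 - x^2))) (at x)"
      using x1 nz by (auto intro!: derivative_eq_intros simp: power2_eq_square)
    moreover have aux: "\<And>D::real. D \<noteq> 0 \<Longrightarrow> (1 * D - x * (- (2 * x))) / D^2 - 1 / D = 2 * x^2 / D^2"
      by (simp add: field_simps power2_eq_square)
    moreover have "(1 * (1 - x^2) - x * (- (2 * x))) / (1 - x^2)^2 - 1 / (1 - x^2) = 2 * x^2 / (1 - x^2)^2"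
      using aux[OF nz(1)] .
    moreover have "2 * x^2 / (1 - x^2)^2 > 0" using x nz by simp
    ultimately show "\<exists>y. ((\<lambda>t. t / (1 - t^2) - artanh t) has_real_derivative y) (at x) \<and> y > 0" by auto
  next
    have "\<forall>t\<in>{0..z}. 1 - t^2 \<noteq> 0"
    proof
      fix t assume "t \<in> {0..z}" then have "\<bar>t\<bar> < 1" using assms by auto
      then show "1 - t^2 \<noteq> 0" using abs_square_less_1[of t] by auto
    qed
    then show "continuous_on {0..z} (\<lambda>t. t / (1 - t^2) - artanh t)"
      using assms by (intro continuous_intros) auto
  qed
  then show ?thesis by simp
qed

definition phi :: "real \<Rightarrow> real" where "phi z = artanh z / z"

lemma phi_mono:
  assumes "0 < a" "a < b" "b < 1"
  shows "phi a < phi b"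
proof -
  show ?thesis unfolding phi_def
  proof (rule DERIV_pos_imp_increasing_open[OF assms(2)])
    fix x :: real assume x: "a < x" "x < b"
    then have x0: "0 < x" "x < 1" using assms by auto
    then have x1: "\<bar>x\<bar> < 1" by auto
    have nz: "1 - x^2 > 0" using x1 by (auto simp: abs_square_less_1)
    have "((\<lambda>t. artanh t / t) has_real_derivative ((1 / (1 - x^2) * x - artanh x * 1) / (x * x))) (at x)"
      using x1 x0 by (auto intro!: derivative_eq_intros)
    moreover have "(1 / (1 - x^2) * x - artanh x * 1) / (x * x) > 0"
    proof -
      have "artanh x < x / (1 - x^2)" by (rule artanh_lt_bound[OF x0])
      then have "1 / (1 - x^2) * x - artanh x * 1 > 0" by simp
      then show ?thesis using x0 by simp
    qed
    ultimately show "\<exists>y. ((\<lambda>t. artanh t / t) has_real_derivative y) (at x) \<and> y > 0" by blast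
  next
    have "\<forall>t\<in>{a..b}. t \<noteq> 0" using assms by auto
    then show "continuous_on {a..b} (\<lambda>t. artanh t / t)"
      using assms by (intro continuous_intros) auto
  qed
qed

lemma tanh_artanh:
  fixes m :: real assumes "\<bar>m\<bar> < 1"
  shows "tanh (artanh m) = m"
proof -
  have p: "1 + m > 0" "1 - m > 0" using assms by auto
  have "exp (- 2 * artanh m) = exp (- ln ((1 + m) / (1 - m)))" unfolding artanh_def by simp
  also have "\<dots> = (1 - m) / (1 + m)" using p by (simp add: exp_minus)
  finally have e: "exp (- 2 * artanh m) = (1 - m) / (1 + m)" .
  show ?thesis unfolding tanh_real_altdef e using p by (simp add: field_simps)
qed

lemma fixed_point:
  fixes g :: real assumes "g > 1"
  shows "\<exists>m. 0 < m \<and> m < 1 \<and> artanh m = g * m"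
proof -
  define z0 where "z0 = sqrt (1 - 1 / g)"
  have zz: "z0^2 = 1 - 1/g" unfolding z0_def using assms by simp
  have z00: "0 < z0" "z0 < 1" unfolding z0_def using assms by auto
  have "phi z0 < 1 / (1 - z0^2)"
    using artanh_lt_bound[OF z00] z00 unfolding phi_def by (simp add: divide_less_eq field_simps)
  also have "1 / (1 - z0^2) = g" unfolding zz using assms by simp
  finally have p0: "phi z0 < g" .
  define z1 where "z1 = 1 - exp (- 2 * g) / 2"
  have e0: "0 < exp (- 2 * g)" "exp (- 2 * g) < 1" using assms by auto
  have z10: "0 < z1" "z1 < 1" unfolding z1_def using e0 by linarith+
  have "artanh z1 > g"
  proof -
    have "ln (1 / (1 - z1)) \<le> ln ((1 + z1) / (1 - z1))"
      using z10 by (subst ln_le_cancel_iff) (auto simp: divide_right_mono)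
    moreover have "ln (1 / (1 - z1)) = 2 * g + ln 2"
      unfolding z1_def by (simp add: ln_div exp_minus ln_inverse)
    moreover have l2: "ln (2::real) > 0" by simp
    ultimately have "ln ((1 + z1) / (1 - z1)) > 2 * g" by linarith
    then show ?thesis unfolding artanh_def by simp
  qed
  then have p1: "phi z1 > g" unfolding phi_def using z10 assms by (simp add: less_divide_eq) (smt (verit) mult_less_cancel_left1)
  have "z0 < z1"
  proof (rule ccontr)
    assume "\<not> z0 < z1"
    then have "z1 \<le> z0" by simp
    then have "phi z1 \<le> phi z0" using phi_mono[of z1 z0] z10 z00 by (cases "z1 = z0") auto
    then show False using p0 p1 by simp
  qed
  have "continuous_on {z0..z1} phi"
  proof -
    have "\<forall>t\<in>{z0..z1}. t \<noteq> 0 \<and> - 1 < t \<and> t < 1" using z00 z10 by auto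
    then show ?thesis unfolding phi_def[abs_def] by (intro continuous_intros) auto
  qed
  then obtain m where m: "z0 \<le> m" "m \<le> z1" "phi m = g"
    using IVT'[of phi z0 g z1] p0 p1 \<open>z0 < z1\<close> by auto
  then have "0 < m" "m < 1" using z00 z10 by auto
  moreover have "artanh m = g * m" using m(3) \<open>0 < m\<close> unfolding phi_def by (simp add: field_simps)
  ultimately show ?thesis by blast
qed


lemma maximizer_exists: "\<exists>z\<in>square. \<forall>y\<in>square. Gamma_fn \<alpha> \<beta> y \<le> Gamma_fn \<alpha> \<beta> z"
  by (rule continuous_attains_sup[OF compact_square _ Gamma_cont]) (auto simp: square_def)

lemma LD:
  assumes a: "0 \<le> \<alpha>" "\<alpha> \<le> \<beta>" and eps: "\<epsilon> > 0"
  shows "\<exists>c>0. \<exists>N0. \<forall>N\<ge>N0. \<forall>S. admissible N S \<longrightarrow>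
            gibbs_prob N \<alpha> \<beta> S (\<lambda>\<sigma>. magn N S \<sigma> \<notin> (\<Union>p\<in>maximizers \<alpha> \<beta>. ball p \<epsilon>))
              \<le> exp (- c * real N)"
proof -
  define U where "U = (\<Union>p\<in>maximizers \<alpha> \<beta>. ball p \<epsilon>)"
  obtain z0 where z0: "z0 \<in> square" "\<And>y. y \<in> square \<Longrightarrow> Gamma_fn \<alpha> \<beta> y \<le> Gamma_fn \<alpha> \<beta> z0"
    using maximizer_exists by blast
  have z0b: "\<bar>fst z0\<bar> \<le> 1" "\<bar>snd z0\<bar> \<le> 1" using z0(1) unfolding square_def by auto
  define K where "K = square - U"
  have oU: "open U" unfolding U_def by (intro open_UN) auto
  have cK: "compact K" unfolding K_def by (rule compact_diff[OF compact_square oU])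
  have Z: "partition_fn N \<alpha> \<beta> S \<ge> 2 ^ N * exp (real N * Gamma_fn \<alpha> \<beta> z0)" if "admissible N S" "N > 0" for N S
    by (rule Z_lower[OF that a z0b])
  show ?thesis
  proof (cases "K = {}")
    case True
    show ?thesis
    proof (intro exI[of _ 1] exI[of _ 0] conjI allI impI)
      fix N :: nat and S assume adm: "admissible N S"
      have E0: "{\<sigma>\<in>configs N. magn N S \<sigma> \<notin> U} = {}"
        using magn_lattice(2)[OF adm] True unfolding K_def by auto
      then show "gibbs_prob N \<alpha> \<beta> S (\<lambda>\<sigma>. magn N S \<sigma> \<notin> (\<Union>p\<in>maximizers \<alpha> \<beta>. ball p \<epsilon>)) \<le> exp (- 1 * real N)"
        unfolding gibbs_prob_def U_def[symmetric] E0 by simp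
    qed simp
  next
    case False
    obtain v0 where v0: "v0 \<in> K" "\<And>y. y \<in> K \<Longrightarrow> Gamma_fn \<alpha> \<beta> y \<le> Gamma_fn \<alpha> \<beta> v0"
      using continuous_attains_sup[OF cK False continuous_on_subset[OF Gamma_cont]] unfolding K_def by blast
    have v0M: "v0 \<notin> maximizers \<alpha> \<beta>"
    proof
      assume "v0 \<in> maximizers \<alpha> \<beta>"
      then have "v0 \<in> U" unfolding U_def using eps by (intro UN_I[of v0]) auto
      then show False using v0(1) unfolding K_def by auto
    qed
    have "Gamma_fn \<alpha> \<beta> v0 < Gamma_fn \<alpha> \<beta> z0"
    proof (rule ccontr)
      assume "\<not> ?thesis"
      then have "\<forall>y\<in>square. Gamma_fn \<alpha> \<beta> y \<le> Gamma_fn \<alpha> \<beta> v0" using z0(2) by force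
      then have "v0 \<in> maximizers \<alpha> \<beta>" using v0(1) unfolding maximizers_def K_def by auto
      then show False using v0M by simp
    qed
    define \<delta> where "\<delta> = (Gamma_fn \<alpha> \<beta> z0 - Gamma_fn \<alpha> \<beta> v0) / 3"
    have d0: "\<delta> > 0" unfolding \<delta>_def using \<open>Gamma_fn \<alpha> \<beta> v0 < Gamma_fn \<alpha> \<beta> z0\<close> by simp
    define \<eta> where "\<eta> = min \<delta> 1"
    have eta: "0 < \<eta>" "\<eta> \<le> 1" "\<eta> \<le> \<delta>" unfolding \<eta>_def using d0 by auto
    obtain N0 where N0: "\<And>N. N \<ge> N0 \<Longrightarrow> (real N + 1)^2 \<le> exp (\<delta> * real N)"
      using poly_exp_eventually[OF d0] by blast
    show ?thesis
    proof (intro exI[of _ \<delta>] exI[of _ "max N0 1"] conjI allI impI d0)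
      fix N :: nat and S assume NN: "max N0 1 \<le> N" and adm: "admissible N S"
      have N: "N > 0" using NN by simp
      have G: "Gamma_fn \<alpha> \<beta> (magn N S \<sigma>) \<le> Gamma_fn \<alpha> \<beta> v0" if "\<sigma> \<in> configs N" "\<not> magn N S \<sigma> \<in> U" for \<sigma>
        using v0(2) magn_lattice(2)[OF adm that(1)] that(2) unfolding K_def by auto
      have num: "(\<Sum>\<sigma>\<in>{\<sigma>\<in>configs N. \<not> magn N S \<sigma> \<in> U}. gibbs_weight N \<alpha> \<beta> S \<sigma>)
          \<le> (real N + 1)^2 * (2 ^ N * exp (real N * (Gamma_fn \<alpha> \<beta> v0 + \<eta>)))"
        by (rule numer_bound[OF adm N eta(1,2), where P="\<lambda>\<sigma>. magn N S \<sigma> \<in> U"]) (use G in auto)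
      have Zb: "partition_fn N \<alpha> \<beta> S \<ge> 2 ^ N * exp (real N * Gamma_fn \<alpha> \<beta> z0)" by (rule Z[OF adm N])
      have Zpos: "2 ^ N * exp (real N * Gamma_fn \<alpha> \<beta> z0) > (0::real)" by simp
      have "gibbs_prob N \<alpha> \<beta> S (\<lambda>\<sigma>. magn N S \<sigma> \<notin> U)
          \<le> (real N + 1)^2 * (2 ^ N * exp (real N * (Gamma_fn \<alpha> \<beta> v0 + \<eta>))) / (2 ^ N * exp (real N * Gamma_fn \<alpha> \<beta> z0))"
        unfolding gibbs_prob_def
        by (rule frac_le) (use num Zb Zpos in \<open>auto intro: sum_nonneg simp: gibbs_weight_def\<close>)
      also have "\<dots> = (real N + 1)^2 * exp (real N * (Gamma_fn \<alpha> \<beta> v0 + \<eta> - Gamma_fn \<alpha> \<beta> z0))"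
        by (simp add: exp_diff right_diff_distrib)
      also have "\<dots> \<le> exp (\<delta> * real N) * exp (- (2 * \<delta>) * real N)"
      proof (rule mult_mono)
        show "(real N + 1)^2 \<le> exp (\<delta> * real N)" using N0 NN by simp
        have "real N * (Gamma_fn \<alpha> \<beta> v0 + \<eta> - Gamma_fn \<alpha> \<beta> z0) \<le> real N * (- (2 * \<delta>))"
        proof (intro mult_left_mono)
          show "Gamma_fn \<alpha> \<beta> v0 + \<eta> - Gamma_fn \<alpha> \<beta> z0 \<le> - (2 * \<delta>)"
          proof -
            have "3 * \<delta> = Gamma_fn \<alpha> \<beta> z0 - Gamma_fn \<alpha> \<beta> v0" unfolding \<delta>_def by simp
            then show ?thesis using eta(3) by linarith
          qed
        qed auto
        then show "exp (real N * (Gamma_fn \<alpha> \<beta> v0 + \<eta> - Gamma_fn \<alpha> \<beta> z0)) \<le> exp (- (2 * \<delta>) * real N)"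
          by (simp add: mult.commute)
      qed auto
      also have "\<dots> = exp (- \<delta> * real N)" by (simp flip: exp_add)
      finally show "gibbs_prob N \<alpha> \<beta> S (\<lambda>\<sigma>. magn N S \<sigma> \<notin> (\<Union>p\<in>maximizers \<alpha> \<beta>. ball p \<epsilon>)) \<le> exp (- \<delta> * real N)"
        unfolding U_def .
    qed
  qed
qed


definition Gd :: "real \<Rightarrow> real \<Rightarrow> real" where "Gd g z = g * z^2 / 2 - Ient z"

lemma Gd_even: "Gd g (- z) = Gd g z" unfolding Gd_def by (simp add: Ient_even)

lemma Gd_cont: "continuous_on {-1..1} (Gd g)"
  unfolding Gd_def[abs_def] using Ient_cont by (intro continuous_intros) auto

lemma Gd_deriv: "\<bar>x\<bar> < 1 \<Longrightarrow> (Gd g has_real_derivative (g * x - artanh x)) (at x)"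
  unfolding Gd_def[abs_def] by (auto intro!: derivative_eq_intros Ient_deriv)

lemma Gd_max:
  assumes g: "g > 1" and m: "0 < m" "m < 1" "artanh m = g * m"
    and z: "\<bar>z\<bar> \<le> 1" "\<bar>z\<bar> \<noteq> m"
  shows "Gd g z < Gd g m"
proof -
  have below: "artanh x < g * x" if "0 < x" "x < m" for x
  proof -
    have "phi x < phi m" using phi_mono[of x m] that m by auto
    then have "artanh x / x < g" using m unfolding phi_def by simp
    then show ?thesis using that by (simp add: divide_less_eq mult.commute)
  qed
  have above: "artanh x > g * x" if "m < x" "x < 1" for x
  proof -
    have "phi m < phi x" using phi_mono[of m x] that m by auto
    then have "artanh x / x > g" using m unfolding phi_def by simp
    then show ?thesis using that m by (simp add: less_divide_eq mult.commute)
  qed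
  have pos: "Gd g t < Gd g m" if "0 \<le> t" "t \<le> 1" "t \<noteq> m" for t
  proof (cases "t < m")
    case True
    show ?thesis
    proof (rule DERIV_pos_imp_increasing_open[OF True])
      fix x assume "t < x" "x < m"
      then have x: "0 < x" "x < m" "\<bar>x\<bar> < 1" using that m by auto
      show "\<exists>y. (Gd g has_real_derivative y) (at x) \<and> y > 0"
        using Gd_deriv[OF x(3)] below[OF x(1,2)] by (intro exI[of _ "g * x - artanh x"]) auto
    next
      show "continuous_on {t..m} (Gd g)" using continuous_on_subset[OF Gd_cont] that m by auto
    qed
  next
    case False
    then have mt: "m < t" using that by simp
    show ?thesis
    proof (rule DERIV_neg_imp_decreasing_open[OF mt])
      fix x assume "m < x" "x < t"
      then have x: "m < x" "x < 1" "\<bar>x\<bar> < 1" using that m by auto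
      show "\<exists>y. (Gd g has_real_derivative y) (at x) \<and> y < 0"
        using Gd_deriv[OF x(3)] above[OF x(1,2)] by (intro exI[of _ "g * x - artanh x"]) auto
    next
      show "continuous_on {m..t} (Gd g)" using continuous_on_subset[OF Gd_cont] that m by auto
    qed
  qed
  show ?thesis
  proof (cases "z \<ge> 0")
    case True then show ?thesis using pos[of z] z by auto
  next
    case False then show ?thesis using pos[of "-z"] z Gd_even[of g z] by auto
  qed
qed

lemma Gamma_Gd:
  "Gamma_fn \<alpha> \<beta> (x, y) = Gd ((\<alpha> + \<beta>) / 2) x / 2 + Gd ((\<alpha> + \<beta>) / 2) y / 2 - \<alpha> / 8 * (x - y)^2"
  unfolding Gamma_fn_def Gd_def by (simp add: power2_eq_square field_simps) 

lemma part_ii_max: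
  assumes a: "\<alpha> > 0" and g: "(\<alpha> + \<beta>) / 2 > 1" and m: "0 < m" "m < 1" "artanh m = (\<alpha> + \<beta>) / 2 * m"
  shows "maximizers \<alpha> \<beta> = {(m, m), (-m, -m)}"
proof -
  define g where "g = (\<alpha> + \<beta>) / 2"
  have g1: "g > 1" and mg: "artanh m = g * m" using g m unfolding g_def by auto
  have le: "Gd g z \<le> Gd g m" if "\<bar>z\<bar> \<le> 1" for z
    using Gd_max[OF g1 m(1,2) mg that] Gd_even[of g m] m by (cases "\<bar>z\<bar> = m") (auto simp: abs_if split: if_splits)
  have eqm: "Gd g z = Gd g m \<Longrightarrow> z = m \<or> z = - m" if "\<bar>z\<bar> \<le> 1" for z
    using Gd_max[OF g1 m(1,2) mg that] by (cases "\<bar>z\<bar> = m") (auto simp: abs_if split: if_splits)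
  have Gxy: "Gamma_fn \<alpha> \<beta> (x, y) = Gd g x / 2 + Gd g y / 2 - \<alpha> / 8 * (x - y)^2" for x y
    unfolding g_def by (rule Gamma_Gd)
  have upper: "Gamma_fn \<alpha> \<beta> p \<le> Gd g m" if "p \<in> square" for p
  proof -
    obtain x y where p: "p = (x, y)" by (cases p)
    have "\<bar>x\<bar> \<le> 1" "\<bar>y\<bar> \<le> 1" using that unfolding p square_def by auto
    then have "Gd g x \<le> Gd g m" "Gd g y \<le> Gd g m" using le by auto
    moreover have "\<alpha> / 8 * (x - y)^2 \<ge> 0" using a by simp
    ultimately show ?thesis unfolding p Gxy by linarith
  qed
  have vm: "Gamma_fn \<alpha> \<beta> (m, m) = Gd g m" "Gamma_fn \<alpha> \<beta> (-m, -m) = Gd g m"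
    unfolding Gxy using Gd_even[of g m] by simp_all
  have sqm: "(m, m) \<in> square" "(-m, -m) \<in> square" using m unfolding square_def by auto
  show ?thesis
  proof
    show "{(m, m), (-m, -m)} \<subseteq> maximizers \<alpha> \<beta>"
      using upper vm sqm unfolding maximizers_def by auto
    show "maximizers \<alpha> \<beta> \<subseteq> {(m, m), (-m, -m)}"
    proof
      fix p assume pM: "p \<in> maximizers \<alpha> \<beta>"
      obtain x y where p: "p = (x, y)" by (cases p)
      have psq: "p \<in> square" and ge: "Gd g m \<le> Gamma_fn \<alpha> \<beta> p"
        using pM sqm(1) vm(1) unfolding maximizers_def by force+
      have b: "\<bar>x\<bar> \<le> 1" "\<bar>y\<bar> \<le> 1" using psq unfolding p square_def by auto
      have lx: "Gd g x \<le> Gd g m" and ly: "Gd g y \<le> Gd g m" using le b by auto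
      have sq0: "\<alpha> / 8 * (x - y)^2 \<ge> 0" using a by simp
      have e: "Gd g x / 2 + Gd g y / 2 - \<alpha> / 8 * (x - y)^2 \<ge> Gd g m" using ge unfolding p Gxy .
      have "Gd g x = Gd g m" "Gd g y = Gd g m" "\<alpha> / 8 * (x - y)^2 = 0"
        using e lx ly sq0 by linarith+
      then have "x = y" "x = m \<or> x = - m" using a eqm[OF b(1)] by auto
      then show "p \<in> {(m, m), (-m, -m)}" unfolding p by auto
    qed
  qed
qed

lemma part_ii:
  assumes "\<alpha> > 0" "\<alpha> + \<beta> > 2"
  shows "\<exists>m. m > 0 \<and> tanh ((\<alpha> + \<beta>) / 2 * m) = m
                 \<and> (\<forall>z>0. tanh ((\<alpha> + \<beta>) / 2 * z) = z \<longrightarrow> z = m)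
                 \<and> maximizers \<alpha> \<beta> = {(m, m), (-m, -m)}"
proof -
  define g where "g = (\<alpha> + \<beta>) / 2"
  have g1: "g > 1" unfolding g_def using assms by simp
  obtain m where m: "0 < m" "m < 1" "artanh m = g * m" using fixed_point[OF g1] by blast
  have t: "tanh (g * m) = m" using tanh_artanh[of m] m by simp
  have uniq: "z = m" if "z > 0" "tanh (g * z) = z" for z
  proof -
    have z1: "z < 1" using tanh_real_lt_1[of "g * z"] that by simp
    have az: "artanh z = g * z" using artanh_tanh_real[of "g * z"] that by simp
    have "phi z = g" "phi m = g" using az m that unfolding phi_def by auto
    then show "z = m" using phi_mono[of z m] phi_mono[of m z] that z1 m by (cases "z < m"; cases "m < z") auto
  qed
  show ?thesis
    using m t uniq part_ii_max[OF assms(1) _ m(1,2)] g1 m(3) unfolding g_def by blast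
qed


lemma avg_bound:
  fixes w h :: "'a \<Rightarrow> real"
  assumes fin: "finite C" and wpos: "\<And>x. x \<in> C \<Longrightarrow> w x > 0" and Z: "Z = (\<Sum>x\<in>C. w x)" "Z > 0"
    and r0: "r \<ge> 0"
    and hB: "\<And>x. x \<in> C \<Longrightarrow> \<bar>h x\<bar> \<le> B" and hr: "\<And>x. x \<in> C \<Longrightarrow> \<not> P x \<Longrightarrow> \<bar>h x\<bar> \<le> r"
  shows "\<bar>(\<Sum>x\<in>C. w x * h x) / Z\<bar> \<le> r + B * ((\<Sum>x\<in>{x\<in>C. P x}. w x) / Z)"
proof -
  have "\<bar>\<Sum>x\<in>C. w x * h x\<bar> \<le> (\<Sum>x\<in>C. w x * \<bar>h x\<bar>)"
    by (intro order.trans[OF sum_abs] sum_mono) (simp add: abs_mult abs_of_pos wpos)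
  also have "\<dots> = (\<Sum>x\<in>{x\<in>C. P x}. w x * \<bar>h x\<bar>) + (\<Sum>x\<in>{x\<in>C. \<not> P x}. w x * \<bar>h x\<bar>)"
  proof -
    have "(\<Sum>x\<in>C. w x * \<bar>h x\<bar>) = (\<Sum>x\<in>{x\<in>C. P x} \<union> {x\<in>C. \<not> P x}. w x * \<bar>h x\<bar>)"
      by (rule sum.cong) auto
    also have "\<dots> = (\<Sum>x\<in>{x\<in>C. P x}. w x * \<bar>h x\<bar>) + (\<Sum>x\<in>{x\<in>C. \<not> P x}. w x * \<bar>h x\<bar>)"
      by (rule sum.union_disjoint) (use fin in auto)
    finally show ?thesis .
  qed
  also have "\<dots> \<le> (\<Sum>x\<in>{x\<in>C. P x}. w x * B) + (\<Sum>x\<in>{x\<in>C. \<not> P x}. w x * r)"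
    using wpos hB hr by (intro add_mono sum_mono mult_left_mono) (auto intro: less_imp_le)
  also have "(\<Sum>x\<in>{x\<in>C. \<not> P x}. w x * r) \<le> (\<Sum>x\<in>C. w x * r)"
  proof -
    have wr: "\<And>x. x \<in> C \<Longrightarrow> 0 \<le> w x * r" using wpos r0 by (meson less_imp_le mult_nonneg_nonneg)
    show ?thesis using fin wr by (intro sum_mono2) auto
  qed
  finally have "\<bar>\<Sum>x\<in>C. w x * h x\<bar> \<le> B * (\<Sum>x\<in>{x\<in>C. P x}. w x) + r * Z"
    unfolding Z(1) by (simp add: sum_distrib_left sum_distrib_right mult.commute)
  then have "\<bar>\<Sum>x\<in>C. w x * h x\<bar> / Z \<le> (B * (\<Sum>x\<in>{x\<in>C. P x}. w x) + r * Z) / Z"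
    using Z(2) by (intro divide_right_mono) auto
  also have "\<dots> = r + B * ((\<Sum>x\<in>{x\<in>C. P x}. w x) / Z)" using Z(2) by (simp add: field_simps)
  finally show ?thesis using Z(2) by simp
qed

lemma weak_conv:
  assumes a: "0 \<le> \<alpha>" "\<alpha> \<le> \<beta>" and M: "maximizers \<alpha> \<beta> = {(0, 0)}"
    and adm: "\<And>k. admissible (2 * k) (Sseq k)"
  shows "law_m_weak_conv_dirac \<alpha> \<beta> Sseq (0, 0)"
  unfolding law_m_weak_conv_dirac_def
proof (intro allI impI)
  fix f :: "real \<times> real \<Rightarrow> real"
  assume fc: "continuous_on UNIV f \<and> bounded (range f)"
  obtain B0 where B0: "\<And>x. \<bar>f x\<bar> \<le> B0" using fc unfolding bounded_iff by auto
  define B where "B = 2 * B0 + 1"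
  have B: "\<And>x. \<bar>f x - f (0,0)\<bar> \<le> B" "B > 0"
  proof -
    fix x
    have "\<bar>f x - f (0,0)\<bar> \<le> \<bar>f x\<bar> + \<bar>f (0,0)\<bar>" by (rule abs_triangle_ineq4)
    then show "\<bar>f x - f (0,0)\<bar> \<le> B" unfolding B_def using B0[of x] B0[of "(0,0)"] by linarith
  next
    show "B > 0" unfolding B_def using B0[of "(0,0)"] by linarith
  qed
  show "(\<lambda>k. gibbs_expect (2 * k) \<alpha> \<beta> (Sseq k) (\<lambda>\<sigma>. f (magn (2 * k) (Sseq k) \<sigma>))) \<longlonglongrightarrow> f (0, 0)"
  proof (rule LIMSEQ_I)
    fix r :: real assume r: "r > 0"
    have "isCont f (0,0)" using fc by (simp add: continuous_on_eq_continuous_at)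
    then obtain d where d: "d > 0" "\<And>x. dist x (0,0) < d \<Longrightarrow> dist (f x) (f (0,0)) < r / 2"
      unfolding continuous_at_eps_delta using r by (meson half_gt_zero)
    obtain c N0 where c: "c > 0" and N0: "\<And>N S. N \<ge> N0 \<Longrightarrow> admissible N S \<Longrightarrow>
        gibbs_prob N \<alpha> \<beta> S (\<lambda>\<sigma>. magn N S \<sigma> \<notin> (\<Union>p\<in>maximizers \<alpha> \<beta>. ball p d)) \<le> exp (- c * real N)"
      using LD[OF a d(1)] by blast
    have "(\<lambda>k. B * exp (- c * real (2 * k))) \<longlonglongrightarrow> 0"
      using c by real_asymp
    from LIMSEQ_D[OF this, of "r/2"] r obtain k1 where k1: "\<And>k. k \<ge> k1 \<Longrightarrow> \<bar>B * exp (- c * real (2 * k))\<bar> < r / 2"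
      by auto
    show "\<exists>no. \<forall>k\<ge>no. norm (gibbs_expect (2 * k) \<alpha> \<beta> (Sseq k) (\<lambda>\<sigma>. f (magn (2 * k) (Sseq k) \<sigma>)) - f (0, 0)) < r"
    proof (intro exI[of _ "max (max N0 k1) 1"] allI impI)
      fix k assume kk: "max (max N0 k1) 1 \<le> k"
      define N where "N = 2 * k" define S where "S = Sseq k"
      have admk: "admissible N S" unfolding N_def S_def by (rule adm)
      have NN0: "N \<ge> N0" using kk unfolding N_def by simp
      have fin: "finite (configs N)" unfolding configs_def by (intro finite_PiE) auto
      have ne: "configs N \<noteq> {}" unfolding configs_def by (simp add: PiE_eq_empty_iff)
      define Z where "Z = partition_fn N \<alpha> \<beta> S"
      have wpos: "gibbs_weight N \<alpha> \<beta> S x > 0" for x unfolding gibbs_weight_def by simp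
      have Zpos: "Z > 0" unfolding Z_def partition_fn_def using fin ne wpos by (intro sum_pos) auto
      let ?P = "\<lambda>\<sigma>. magn N S \<sigma> \<notin> ball (0,0) d"
      have U: "(\<Union>p\<in>maximizers \<alpha> \<beta>. ball p d) = ball (0,0) d" unfolding M by simp
      have prob: "(\<Sum>x\<in>{x\<in>configs N. ?P x}. gibbs_weight N \<alpha> \<beta> S x) / Z \<le> exp (- c * real N)"
        using N0[OF NN0 admk] unfolding gibbs_prob_def U Z_def .
      have eqE: "gibbs_expect N \<alpha> \<beta> S (\<lambda>\<sigma>. f (magn N S \<sigma>)) - f (0, 0)
          = (\<Sum>x\<in>configs N. gibbs_weight N \<alpha> \<beta> S x * (f (magn N S x) - f (0,0))) / Z"
      proof -
        have "(\<Sum>x\<in>configs N. gibbs_weight N \<alpha> \<beta> S x * (f (magn N S x) - f (0,0)))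
            = (\<Sum>x\<in>configs N. gibbs_weight N \<alpha> \<beta> S x * f (magn N S x)) - Z * f (0,0)"
          unfolding Z_def partition_fn_def by (simp add: algebra_simps sum_subtractf sum_distrib_left)
        then show ?thesis unfolding gibbs_expect_def Z_def[symmetric] using Zpos by (simp add: field_simps)
      qed
      have "\<bar>(\<Sum>x\<in>configs N. gibbs_weight N \<alpha> \<beta> S x * (f (magn N S x) - f (0,0))) / Z\<bar>
          \<le> r / 2 + B * ((\<Sum>x\<in>{x\<in>configs N. ?P x}. gibbs_weight N \<alpha> \<beta> S x) / Z)"
      proof (rule avg_bound[OF fin wpos _ Zpos])
        show "Z = (\<Sum>x\<in>configs N. gibbs_weight N \<alpha> \<beta> S x)" unfolding Z_def partition_fn_def ..
        show "\<bar>f (magn N S x) - f (0, 0)\<bar> \<le> B" for x by (rule B(1))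
        show "\<bar>f (magn N S x) - f (0, 0)\<bar> \<le> r / 2" if "\<not> ?P x" for x
          using d(2)[of "magn N S x"] that by (auto simp: dist_real_def dist_commute)
      qed (use r in auto)
      also have "\<dots> \<le> r / 2 + B * exp (- c * real N)"
        using prob B(2) by (intro add_left_mono mult_left_mono) auto
      also have "\<dots> < r" using k1[of k] kk B(2) unfolding N_def by auto
      finally show "norm (gibbs_expect (2 * k) \<alpha> \<beta> (Sseq k) (\<lambda>\<sigma>. f (magn (2 * k) (Sseq k) \<sigma>)) - f (0, 0)) < r"
        using eqE unfolding N_def S_def by simp
    qed
  qed
qed


theorem mainTheorem2:
  fixes \<alpha> \<beta> :: real
  assumes "\<beta> > 0" and "0 \<le> \<alpha>" and "\<alpha> \<le> \<beta>"
  shows "(\<forall>\<epsilon>>0. \<exists>c>0. \<exists>N0. \<forall>N\<ge>N0. \<forall>S. admissible N S \<longrightarrow>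
            gibbs_prob N \<alpha> \<beta> S (\<lambda>\<sigma>. magn N S \<sigma> \<notin> (\<Union>p\<in>maximizers \<alpha> \<beta>. ball p \<epsilon>))
              \<le> exp (- c * real N))
       \<and> (\<alpha> + \<beta> \<le> 2 \<longrightarrow>
            (\<alpha> > 0 \<longrightarrow> (\<forall>x1 x2. x1 \<in> {-1<..<1} \<and> x2 \<in> {-1<..<1} \<longrightarrow>
                 ((1/2 * \<beta> * x1 + 1/2 * \<alpha> * x2 = artanh x1 \<and>
                   1/2 * \<beta> * x2 + 1/2 * \<alpha> * x1 = artanh x2) \<longleftrightarrow> (x1 = 0 \<and> x2 = 0))))
            \<and> maximizers \<alpha> \<beta> = {(0, 0)}
            \<and> (\<forall>Sseq. (\<forall>k. admissible (2 * k) (Sseq k)) \<longrightarrow>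
                 law_m_weak_conv_dirac \<alpha> \<beta> Sseq (0, 0)))
       \<and> (\<alpha> + \<beta> > 2 \<and> \<alpha> > 0 \<longrightarrow>
            (\<exists>m. m > 0 \<and> tanh ((\<alpha> + \<beta>) / 2 * m) = m
                 \<and> (\<forall>z>0. tanh ((\<alpha> + \<beta>) / 2 * z) = z \<longrightarrow> z = m)
                 \<and> maximizers \<alpha> \<beta> = {(m, m), (-m, -m)}))"
proof -
  have bpos: "0 \<le> \<beta>" using assms(1) by simp
  have P1: "\<forall>\<epsilon>>0. \<exists>c>0. \<exists>N0. \<forall>N\<ge>N0. \<forall>S. admissible N S \<longrightarrow>
            gibbs_prob N \<alpha> \<beta> S (\<lambda>\<sigma>. magn N S \<sigma> \<notin> (\<Union>p\<in>maximizers \<alpha> \<beta>. ball p \<epsilon>))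
              \<le> exp (- c * real N)"
    using LD[OF assms(2,3)] by blast
  have P2: "\<alpha> + \<beta> \<le> 2 \<longrightarrow>
            (\<alpha> > 0 \<longrightarrow> (\<forall>x1 x2. x1 \<in> {-1<..<1} \<and> x2 \<in> {-1<..<1} \<longrightarrow>
                 ((1/2 * \<beta> * x1 + 1/2 * \<alpha> * x2 = artanh x1 \<and>
                   1/2 * \<beta> * x2 + 1/2 * \<alpha> * x1 = artanh x2) \<longleftrightarrow> (x1 = 0 \<and> x2 = 0))))
            \<and> maximizers \<alpha> \<beta> = {(0, 0)}
            \<and> (\<forall>Sseq. (\<forall>k. admissible (2 * k) (Sseq k)) \<longrightarrow>
                 law_m_weak_conv_dirac \<alpha> \<beta> Sseq (0, 0))"
  proof
    assume s: "\<alpha> + \<beta> \<le> 2"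
    have M: "maximizers \<alpha> \<beta> = {(0, 0)}" by (rule part_i_max[OF assms(2,3) s])
    show "(\<alpha> > 0 \<longrightarrow> (\<forall>x1 x2. x1 \<in> {-1<..<1} \<and> x2 \<in> {-1<..<1} \<longrightarrow>
                 ((1/2 * \<beta> * x1 + 1/2 * \<alpha> * x2 = artanh x1 \<and>
                   1/2 * \<beta> * x2 + 1/2 * \<alpha> * x1 = artanh x2) \<longleftrightarrow> (x1 = 0 \<and> x2 = 0))))
            \<and> maximizers \<alpha> \<beta> = {(0, 0)}
            \<and> (\<forall>Sseq. (\<forall>k. admissible (2 * k) (Sseq k)) \<longrightarrow>
                 law_m_weak_conv_dirac \<alpha> \<beta> Sseq (0, 0))"
      using part_i_crit[OF assms(2) bpos s] M weak_conv[OF assms(2,3) M] by blast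
  qed
  have P3: "\<alpha> + \<beta> > 2 \<and> \<alpha> > 0 \<longrightarrow>
            (\<exists>m. m > 0 \<and> tanh ((\<alpha> + \<beta>) / 2 * m) = m
                 \<and> (\<forall>z>0. tanh ((\<alpha> + \<beta>) / 2 * z) = z \<longrightarrow> z = m)
                 \<and> maximizers \<alpha> \<beta> = {(m, m), (-m, -m)})"
    using part_ii by blast
  show ?thesis using P1 P2 P3 by blast
qed

end
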